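(* For every $n\in\mathbb N$, the monoid $T_n$ is an inverse monoid: for every $s\in T_n$ there is a unique $t\in T_n$ with $s=sts$ and $t=tst$.
   Context: $\Bbbk$ is a field. $\mathcal{TL}_0(\Bbbk)$ is the strict $\Bbbk$-linear monoidal category with objects $\mathbf 0,\mathbf 1,\dots$, $\mathbf m\otimes\mathbf n=\mathbf{m+n}$, generated by $\mathrm{cup}:\mathbf 0\to\mathbf 2$ and $\mathrm{cap}:\mathbf 2\to\mathbf 0$ subject to $(\mathrm{id}_{\mathbf 1}\otimes\mathrm{cap})\circ(\mathrm{cup}\otimes\mathrm{id}_{\mathbf 1})=0=(\mathrm{cap}\otimes\mathrm{id}_{\mathbf 1})\circ(\mathrm{id}_{\mathbf 1}\otimes\mathrm{cup})$ and $\mathrm{cap}\circ\mathrm{cup}=\mathrm{id}_{\mathbf 0}$. A Temperley–Lieb diagram is a nonzero morphism built from cup, cap and identities using only $\otimes$ and $\circ$; the composite of two Temperley–Lieb diagrams is either a Temperley–Lieb diagram or $0$. $T_n$ is the monoid whose elements are the Temperley–Lieb diagrams $\mathbf n\to\mathbf n$ together with an extra zero element $\ast$, with product given by composition in $\mathcal{TL}_0(\Bbbk)$, where a composite equal to $0$ is replaced by $\ast$, and $\ast$ absorbs everything. *)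

theory Defs
  imports Main
begin

datatype tm = Cup | Cap | Id nat | Comp tm tm | Tens tm tm
  (* Comp g f  denotes  g \<circ> f ;  Tens f g  denotes  f \<otimes> g *)

fun dom :: "tm \<Rightarrow> nat" and cod :: "tm \<Rightarrow> nat" where
  "dom Cup = 0" | "cod Cup = 2"
| "dom Cap = 2" | "cod Cap = 0"
| "dom (Id n) = n" | "cod (Id n) = n"
| "dom (Comp g f) = dom f" | "cod (Comp g f) = cod g"
| "dom (Tens f g) = dom f + dom g" | "cod (Tens f g) = cod f + cod g"

fun wt :: "tm \<Rightarrow> bool" where
  "wt Cup = True"
| "wt Cap = True"
| "wt (Id n) = True"
| "wt (Comp g f) = (wt g \<and> wt f \<and> dom g = cod f)"
| "wt (Tens f g) = (wt f \<and> wt g)"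

inductive ax :: "tm \<Rightarrow> tm \<Rightarrow> bool" where
  comp_assoc: "ax (Comp (Comp h g) f) (Comp h (Comp g f))"
| id_left: "ax (Comp (Id (cod f)) f) f"
| id_right: "ax (Comp f (Id (dom f))) f"
| tens_assoc: "ax (Tens (Tens f g) h) (Tens f (Tens g h))"
| unit_left: "ax (Tens (Id 0) f) f"
| unit_right: "ax (Tens f (Id 0)) f"
| tens_id: "ax (Tens (Id m) (Id n)) (Id (m + n))"
| interchange: "ax (Comp (Tens f g) (Tens f' g')) (Tens (Comp f f') (Comp g g'))"

text \<open>Formal linear combinations of terms, with coefficients in a field.\<close>

definition delta :: "tm \<Rightarrow> tm \<Rightarrow> 'k::field" where
  "delta t u = (if u = t then 1 else 0)"

definition push :: "(tm \<Rightarrow> tm) \<Rightarrow> (tm \<Rightarrow> 'k::field) \<Rightarrow> tm \<Rightarrow> 'k" where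
  "push c v u = (if u \<in> range c then v (the_inv c u) else 0)"

definition zigA :: tm where
  "zigA = Comp (Tens (Id 1) Cap) (Tens Cup (Id 1))"

definition zigB :: tm where
  "zigB = Comp (Tens Cap (Id 1)) (Tens (Id 1) Cup)"

text \<open>\<open>null m n v\<close>: the linear combination \<open>v\<close> of terms \<open>m \<rightarrow> n\<close> lies in the
  kernel of the (full, linear) functor from formal combinations to TL_0(k); i.e. the
  linear span of the monoidal-category axioms and the defining relations,
  closed under composition and tensoring with arbitrary terms on both sides.\<close>

inductive null :: "nat \<Rightarrow> nat \<Rightarrow> (tm \<Rightarrow> 'k::field) \<Rightarrow> bool" where
  null_ax: "\<lbrakk>ax s t; wt s; wt t; dom s = m; cod s = n; dom t = m; cod t = n\<rbrakk>
     \<Longrightarrow> null m n (\<lambda>u. delta s u - delta t u)"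
| null_zigA: "null 1 1 (delta zigA)"
| null_zigB: "null 1 1 (delta zigB)"
| null_loop: "null 0 0 (\<lambda>u. delta (Comp Cap Cup) u - delta (Id 0) u)"
| null_zero: "null m n (\<lambda>u. 0)"
| null_add: "\<lbrakk>null m n v; null m n w\<rbrakk> \<Longrightarrow> null m n (\<lambda>u. v u + w u)"
| null_smult: "null m n v \<Longrightarrow> null m n (\<lambda>u. c * v u)"
| null_comp_left: "\<lbrakk>null m n v; wt g; dom g = n\<rbrakk> \<Longrightarrow> null m (cod g) (push (Comp g) v)"
| null_comp_right: "\<lbrakk>null m n v; wt f; cod f = m\<rbrakk> \<Longrightarrow> null (dom f) n (push (\<lambda>s. Comp s f) v)"
| null_tens_left: "\<lbrakk>null m n v; wt h\<rbrakk> \<Longrightarrow> null (m + dom h) (n + cod h) (push (\<lambda>s. Tens s h) v)"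
| null_tens_right: "\<lbrakk>null m n v; wt h\<rbrakk> \<Longrightarrow> null (dom h + m) (cod h + n) (push (Tens h) v)"

definition tl_zero :: "'k::field itself \<Rightarrow> tm \<Rightarrow> bool" where
  "tl_zero K t = null (dom t) (cod t) (delta t :: tm \<Rightarrow> 'k)"

definition tl_eq :: "'k::field itself \<Rightarrow> tm \<Rightarrow> tm \<Rightarrow> bool" where
  "tl_eq K s t = (dom s = dom t \<and> cod s = cod t \<and>
     null (dom s) (cod s) ((\<lambda>u. delta s u - delta t u) :: tm \<Rightarrow> 'k))"

definition is_diagram :: "'k::field itself \<Rightarrow> nat \<Rightarrow> tm \<Rightarrow> bool" where
  "is_diagram K n t = (wt t \<and> dom t = n \<and> cod t = n \<and> \<not> tl_zero K t)"

definition cls :: "'k::field itself \<Rightarrow> nat \<Rightarrow> tm \<Rightarrow> tm set" where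
  "cls K n t = {u. wt u \<and> dom u = n \<and> cod u = n \<and> tl_eq K u t}"

text \<open>The monoid T_n: \<open>None\<close> is the extra zero element \<open>\<ast>\<close>,
  \<open>Some C\<close> is the diagram represented by the class \<open>C\<close>.\<close>

definition Tn :: "'k::field itself \<Rightarrow> nat \<Rightarrow> tm set option set" where
  "Tn K n = insert None {Some (cls K n t) | t. is_diagram K n t}"

definition tmul :: "'k::field itself \<Rightarrow> nat \<Rightarrow> tm set option \<Rightarrow> tm set option \<Rightarrow> tm set option" where
  "tmul K n x y = (case x of None \<Rightarrow> None | Some A \<Rightarrow>
     (case y of None \<Rightarrow> None | Some B \<Rightarrow>
       (let a = (SOME a. a \<in> A); b = (SOME b. b \<in> B) in
         if tl_zero K (Comp a b) then None else Some (cls K n (Comp a b)))))"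

end

theory Submission
  imports Defs
begin


definition supp :: "(tm \<Rightarrow> 'k::field) \<Rightarrow> tm set" where
  "supp v = {u. v u \<noteq> 0}"

lemma inj_Comp1: "inj (Comp g)" by (auto simp: inj_def)
lemma inj_Comp2: "inj (\<lambda>s. Comp s f)" by (auto simp: inj_def)
lemma inj_Tens1: "inj (\<lambda>s. Tens s h)" by (auto simp: inj_def)
lemma inj_Tens2: "inj (Tens h)" by (auto simp: inj_def)

lemma push_nz: "inj c \<Longrightarrow> push c v u \<noteq> 0 \<Longrightarrow> \<exists>x. u = c x \<and> v x \<noteq> 0"
  unfolding push_def by (auto simp: the_inv_f_f split: if_splits)

lemma null_typed: "null m n (v::tm \<Rightarrow> 'k::field) \<Longrightarrow> v u \<noteq> 0 \<Longrightarrow> wt u \<and> dom u = m \<and> cod u = n"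
proof (induction arbitrary: u rule: null.induct)
  case (null_ax s t m n)
  then show ?case by (auto simp: delta_def split: if_splits)
next
  case null_zigA
  then show ?case by (auto simp: delta_def zigA_def split: if_splits)
next
  case null_zigB
  then show ?case by (auto simp: delta_def zigB_def split: if_splits)
next
  case null_loop
  then show ?case by (auto simp: delta_def split: if_splits)
next
  case (null_zero m n)
  then show ?case by simp
next
  case (null_add m n v w)
  then show ?case by (cases "v u = 0") auto
next
  case (null_smult m n v c)
  then show ?case by auto
next
  case (null_comp_left m n v g)
  then obtain x where "u = Comp g x" "v x \<noteq> 0" using push_nz[OF inj_Comp1] by blast
  then show ?case using null_comp_left by auto
next
  case (null_comp_right m n v f)
  then obtain x where "u = Comp x f" "v x \<noteq> 0" using push_nz[OF inj_Comp2] by blast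
  then show ?case using null_comp_right by auto
next
  case (null_tens_left m n v h)
  then obtain x where "u = Tens x h" "v x \<noteq> 0" using push_nz[OF inj_Tens1] by blast
  then show ?case using null_tens_left by auto
next
  case (null_tens_right m n v h)
  then obtain x where "u = Tens h x" "v x \<noteq> 0" using push_nz[OF inj_Tens2] by blast
  then show ?case using null_tens_right by auto
qed

lemma delta_self[simp]: "delta t t = (1::'k::field)"
  by (simp add: delta_def)

lemma tl_eq_wt: "tl_eq (K::'k::field itself) s t \<Longrightarrow> wt s \<Longrightarrow> wt t"
proof -
  assume h: "tl_eq K s t" "wt s"
  show "wt t"
  proof (cases "s = t")
    case True then show ?thesis using h by simp
  next
    case False
    have "(\<lambda>u. delta s u - delta t u) t = (-1::'k)" using False by (simp add: delta_def)
    then show ?thesis using h unfolding tl_eq_def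
      using null_typed[of "dom s" "cod s" "\<lambda>u. delta s u - delta t u :: 'k" t] by auto
  qed
qed

lemma tl_eq_wt': "tl_eq (K::'k::field itself) s t \<Longrightarrow> wt t \<Longrightarrow> wt s"
proof -
  assume h: "tl_eq K s t" "wt t"
  show "wt s"
  proof (cases "s = t")
    case True then show ?thesis using h by simp
  next
    case False
    have "(\<lambda>u. delta s u - delta t u) s = (1::'k)" using False by (simp add: delta_def)
    then show ?thesis using h unfolding tl_eq_def
      using null_typed[of "dom s" "cod s" "\<lambda>u. delta s u - delta t u :: 'k" s] by auto
  qed
qed

lemma tl_zero_wt: "tl_zero (K::'k::field itself) t \<Longrightarrow> wt t"
  unfolding tl_zero_def using null_typed[of "dom t" "cod t" "delta t :: tm \<Rightarrow> 'k" t] by simp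

lemma tl_eq_refl: "tl_eq (K::'k::field itself) t t"
  unfolding tl_eq_def using null_zero[of "dom t" "cod t"] by simp

lemma null_neg: "null m n (v::tm \<Rightarrow> 'k::field) \<Longrightarrow> null m n (\<lambda>u. - v u)"
  using null_smult[of m n v "-1"] by simp

lemma null_diff: "null m n (v::tm \<Rightarrow> 'k::field) \<Longrightarrow> null m n w \<Longrightarrow> null m n (\<lambda>u. v u - w u)"
  using null_add[of m n v "\<lambda>u. - w u"] null_neg[of m n w] by simp

lemma tl_eq_sym: "tl_eq (K::'k::field itself) s t \<Longrightarrow> tl_eq K t s"
  unfolding tl_eq_def
proof (elim conjE, intro conjI)
  assume a: "dom s = dom t" "cod s = cod t" and N: "null (dom s) (cod s) (\<lambda>u. delta s u - delta t u :: 'k)"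
  have e: "(\<lambda>u. - (delta s u - delta t u :: 'k)) = (\<lambda>u. delta t u - delta s u)" by (simp add: fun_eq_iff)
  from null_neg[OF N] show "null (dom t) (cod t) (\<lambda>u. delta t u - delta s u :: 'k)"
    unfolding e a .
qed auto

lemma tl_eq_trans[trans]: "tl_eq (K::'k::field itself) s t \<Longrightarrow> tl_eq K t r \<Longrightarrow> tl_eq K s r"
  unfolding tl_eq_def
proof (elim conjE, intro conjI)
  assume a: "dom s = dom t" "cod s = cod t" and N1: "null (dom s) (cod s) (\<lambda>u. delta s u - delta t u :: 'k)"
    and b: "dom t = dom r" "cod t = cod r" and N2: "null (dom t) (cod t) (\<lambda>u. delta t u - delta r u :: 'k)"
  have e: "(\<lambda>u. (delta s u - delta t u) + (delta t u - delta r u) :: 'k) = (\<lambda>u. delta s u - delta r u)"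
    by (simp add: fun_eq_iff)
  from null_add[OF N1 N2[folded a]] show "null (dom s) (cod s) (\<lambda>u. delta s u - delta r u :: 'k)"
    unfolding e .
qed auto

lemma tl_zero_eq: "tl_eq (K::'k::field itself) s t \<Longrightarrow> tl_zero K t \<Longrightarrow> tl_zero K s"
  unfolding tl_eq_def tl_zero_def
proof (elim conjE)
  assume a: "dom s = dom t" "cod s = cod t" and N1: "null (dom s) (cod s) (\<lambda>u. delta s u - delta t u :: 'k)"
    and N2: "null (dom t) (cod t) (delta t :: tm \<Rightarrow> 'k)"
  have e: "(\<lambda>u. (delta s u - delta t u) + delta t u :: 'k) = delta s"
    by (simp add: fun_eq_iff)
  from null_add[OF N1 N2[folded a]] show "null (dom s) (cod s) (delta s :: tm \<Rightarrow> 'k)"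
    unfolding e .
qed

lemma tl_zero_zero_eq: "tl_zero (K::'k::field itself) s \<Longrightarrow> tl_zero K t \<Longrightarrow> dom s = dom t \<Longrightarrow> cod s = cod t \<Longrightarrow> tl_eq K s t"
  unfolding tl_eq_def tl_zero_def
proof (intro conjI)
  assume N1: "null (dom s) (cod s) (delta s :: tm \<Rightarrow> 'k)"
    and N2: "null (dom t) (cod t) (delta t :: tm \<Rightarrow> 'k)" and a: "dom s = dom t" "cod s = cod t"
  from null_diff[OF N1 N2[folded a]] show "null (dom s) (cod s) (\<lambda>u. delta s u - delta t u :: 'k)" .
qed

lemma ax_dom_cod: "ax s t \<Longrightarrow> wt s \<Longrightarrow> wt t \<Longrightarrow> dom s = dom t \<and> cod s = cod t"
  by (induction rule: ax.induct) simp_all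

lemma ax_eq: assumes "ax s t" "wt s" "wt t" shows "tl_eq (K::'k::field itself) s t"
proof -
  have d: "dom s = dom t" "cod s = cod t" using ax_dom_cod[OF assms] by auto
  show ?thesis unfolding tl_eq_def
    using null_ax[OF assms refl refl d(1)[symmetric] d(2)[symmetric]] d by simp
qed

lemma push_delta: "inj c \<Longrightarrow> push c (delta s) = delta (c s)"
  by (auto simp: push_def delta_def fun_eq_iff the_inv_f_f inj_eq)

lemma push_diff: "inj c \<Longrightarrow> push c (\<lambda>u. delta s u - delta t u) = (\<lambda>u. delta (c s) u - delta (c t) u)"
  by (auto simp: push_def delta_def fun_eq_iff the_inv_f_f inj_eq)


lemma eq_comp_left: "tl_eq (K::'k::field itself) s t \<Longrightarrow> wt g \<Longrightarrow> dom g = cod s \<Longrightarrow> tl_eq K (Comp g s) (Comp g t)"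
  unfolding tl_eq_def
proof (elim conjE, intro conjI)
  assume "dom s = dom t" "cod s = cod t" and N: "null (dom s) (cod s) (\<lambda>u. delta s u - delta t u :: 'k)"
    and W: "wt g" "dom g = cod s"
  from null_comp_left[OF N W] show "null (dom (Comp g s)) (cod (Comp g s)) (\<lambda>u. delta (Comp g s) u - delta (Comp g t) u :: 'k)"
    by (simp add: push_diff inj_Comp1)
qed auto

lemma eq_comp_right: "tl_eq (K::'k::field itself) s t \<Longrightarrow> wt f \<Longrightarrow> cod f = dom s \<Longrightarrow> tl_eq K (Comp s f) (Comp t f)"
  unfolding tl_eq_def
proof (elim conjE, intro conjI)
  assume "dom s = dom t" "cod s = cod t" and N: "null (dom s) (cod s) (\<lambda>u. delta s u - delta t u :: 'k)"
    and W: "wt f" "cod f = dom s"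
  from null_comp_right[OF N W] show "null (dom (Comp s f)) (cod (Comp s f)) (\<lambda>u. delta (Comp s f) u - delta (Comp t f) u :: 'k)"
    by (simp add: push_diff[OF inj_Comp2])
qed auto

lemma eq_tens_left: "tl_eq (K::'k::field itself) s t \<Longrightarrow> wt h \<Longrightarrow> tl_eq K (Tens s h) (Tens t h)"
  unfolding tl_eq_def
proof (elim conjE, intro conjI)
  assume "dom s = dom t" "cod s = cod t" and N: "null (dom s) (cod s) (\<lambda>u. delta s u - delta t u :: 'k)"
    and W: "wt h"
  from null_tens_left[OF N W] show "null (dom (Tens s h)) (cod (Tens s h)) (\<lambda>u. delta (Tens s h) u - delta (Tens t h) u :: 'k)"
    by (simp add: push_diff[OF inj_Tens1])
qed auto

lemma eq_tens_right: "tl_eq (K::'k::field itself) s t \<Longrightarrow> wt h \<Longrightarrow> tl_eq K (Tens h s) (Tens h t)"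
  unfolding tl_eq_def
proof (elim conjE, intro conjI)
  assume "dom s = dom t" "cod s = cod t" and N: "null (dom s) (cod s) (\<lambda>u. delta s u - delta t u :: 'k)"
    and W: "wt h"
  from null_tens_right[OF N W] show "null (dom (Tens h s)) (cod (Tens h s)) (\<lambda>u. delta (Tens h s) u - delta (Tens h t) u :: 'k)"
    by (simp add: push_diff[OF inj_Tens2])
qed auto

lemma zero_comp_left: "tl_zero (K::'k::field itself) s \<Longrightarrow> wt g \<Longrightarrow> dom g = cod s \<Longrightarrow> tl_zero K (Comp g s)"
  unfolding tl_zero_def using null_comp_left[of "dom s" "cod s" "delta s :: tm \<Rightarrow> 'k" g]
  by (simp add: push_delta inj_Comp1)

lemma zero_comp_right: "tl_zero (K::'k::field itself) s \<Longrightarrow> wt f \<Longrightarrow> cod f = dom s \<Longrightarrow> tl_zero K (Comp s f)"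
  unfolding tl_zero_def using null_comp_right[of "dom s" "cod s" "delta s :: tm \<Rightarrow> 'k" f]
  by (simp add: push_delta[OF inj_Comp2])

lemma zero_tens_left: "tl_zero (K::'k::field itself) s \<Longrightarrow> wt h \<Longrightarrow> tl_zero K (Tens s h)"
  unfolding tl_zero_def using null_tens_left[of "dom s" "cod s" "delta s :: tm \<Rightarrow> 'k" h]
  by (simp add: push_delta[OF inj_Tens1])

lemma zero_tens_right: "tl_zero (K::'k::field itself) s \<Longrightarrow> wt h \<Longrightarrow> tl_zero K (Tens h s)"
  unfolding tl_zero_def using null_tens_right[of "dom s" "cod s" "delta s :: tm \<Rightarrow> 'k" h]
  by (simp add: push_delta[OF inj_Tens2])

lemma eq_comp: "tl_eq (K::'k::field itself) a a' \<Longrightarrow> tl_eq K b b' \<Longrightarrow> wt a \<Longrightarrow> wt b \<Longrightarrow> dom a = cod b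
   \<Longrightarrow> tl_eq K (Comp a b) (Comp a' b')"
proof -
  assume h: "tl_eq K a a'" "tl_eq K b b'" "wt a" "wt b" "dom a = cod b"
  then have "wt a'" "wt b'" using tl_eq_wt[OF h(1) h(3)] tl_eq_wt[OF h(2) h(4)] by auto
  have D: "dom a' = cod b" using h(1,5) by (simp add: tl_eq_def)
  have "tl_eq K (Comp a b) (Comp a' b)" using eq_comp_right[OF h(1) h(4)] h(5) by simp
  also have "tl_eq K (Comp a' b) (Comp a' b')" using eq_comp_left[OF h(2) \<open>wt a'\<close> D] .
  finally show ?thesis .
qed

lemma eq_tens: "tl_eq (K::'k::field itself) a a' \<Longrightarrow> tl_eq K b b' \<Longrightarrow> wt a \<Longrightarrow> wt b
   \<Longrightarrow> tl_eq K (Tens a b) (Tens a' b')"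
proof -
  assume h: "tl_eq K a a'" "tl_eq K b b'" "wt a" "wt b"
  then have "wt a'" "wt b'" using tl_eq_wt[OF h(1) h(3)] tl_eq_wt[OF h(2) h(4)] by auto
  have "tl_eq K (Tens a b) (Tens a' b)" using eq_tens_left[OF h(1) h(4)] .
  also have "tl_eq K (Tens a' b) (Tens a' b')" using eq_tens_right[OF h(2) \<open>wt a'\<close>] .
  finally show ?thesis .
qed



fun sem :: "tm \<Rightarrow> bool list \<Rightarrow> bool list option" where
  "sem Cup w = (if w = [] then Some [True, False] else None)"
| "sem Cap w = (if w = [True, False] then Some [] else None)"
| "sem (Id n) w = (if length w = n then Some w else None)"
| "sem (Comp g f) w = Option.bind (sem f w) (sem g)"
| "sem (Tens f g) w = (if length w = dom f + dom g then
      (case sem f (take (dom f) w) of None \<Rightarrow> None | Some a \<Rightarrow>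
        (case sem g (drop (dom f) w) of None \<Rightarrow> None | Some b \<Rightarrow> Some (a @ b))) else None)"

lemma sem_len: "sem t w = Some v \<Longrightarrow> length w = dom t \<and> length v = cod t"
  by (induction t arbitrary: w v) (auto simp: bind_eq_Some_conv split: option.splits if_splits)

lemma sem_len1: "sem t w = Some v \<Longrightarrow> length w = dom t"
  using sem_len by blast
lemma sem_len2: "sem t w = Some v \<Longrightarrow> length v = cod t"
  using sem_len by blast

lemma sem_none_len: "length w \<noteq> dom t \<Longrightarrow> sem t w = None"
  using sem_len1 by (cases "sem t w") auto

lemma ax_sem: "ax s t \<Longrightarrow> wt s \<Longrightarrow> wt t \<Longrightarrow> sem s = sem t"
proof (induction rule: ax.induct)
  case (comp_assoc h g f)
  show ?case
  proof
    fix w show "sem (Comp (Comp h g) f) w = sem (Comp h (Comp g f)) w"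
      by (cases "sem f w") auto
  qed
next
  case (id_left f)
  show ?case
  proof
    fix w show "sem (Comp (Id (cod f)) f) w = sem f w"
      by (cases "sem f w") (auto dest: sem_len2)
  qed
next
  case (id_right f)
  show ?case
  proof
    fix w show "sem (Comp f (Id (dom f))) w = sem f w"
      by (auto simp: sem_none_len)
  qed
next
  case (tens_assoc f g h)
  show ?case
  proof
    fix w
    show "sem (Tens (Tens f g) h) w = sem (Tens f (Tens g h)) w"
    proof (cases "length w = dom f + dom g + dom h")
      case True
      have e1: "take (dom f) (take (dom f + dom g) w) = take (dom f) w" by (simp add: min_def)
      have e2: "drop (dom f) (take (dom f + dom g) w) = take (dom g) (drop (dom f) w)" by (simp add: drop_take)
      have e3: "drop (dom f + dom g) w = drop (dom g) (drop (dom f) w)" by (simp add: add.commute)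
      have l1: "length (take (dom f + dom g) w) = dom f + dom g" using True by simp
      have l2: "length (drop (dom f) w) = dom g + dom h" using True by simp
      show ?thesis using True l1 l2 e1 e2 e3
        by (simp del: drop_drop split: option.splits)
    next
      case False
      then show ?thesis by simp
    qed
  qed
next
  case (unit_left f)
  show ?case
  proof
    fix w show "sem (Tens (Id 0) f) w = sem f w"
      by (cases "sem f w") (auto simp: sem_none_len dest: sem_len1)
  qed
next
  case (unit_right f)
  show ?case
  proof
    fix w show "sem (Tens f (Id 0)) w = sem f w"
      by (cases "sem f w") (auto simp: sem_none_len dest: sem_len1 split: option.splits)
  qed
next
  case (tens_id m n)
  show ?case
  proof
    fix w show "sem (Tens (Id m) (Id n)) w = sem (Id (m + n)) w" by auto
  qed
next
  case (interchange f g f' g')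
  show ?case
  proof
    fix w
    show "sem (Comp (Tens f g) (Tens f' g')) w = sem (Tens (Comp f f') (Comp g g')) w"
    proof (cases "length w = dom f' + dom g'")
      case True
      show ?thesis
      proof (cases "sem f' (take (dom f') w)")
        case None
        then show ?thesis using True by simp
      next
        case (Some a)
        have la: "length a = dom f" using sem_len2[OF Some] interchange by simp
        show ?thesis
        proof (cases "sem g' (drop (dom f') w)")
          case None
          then show ?thesis using True Some by (simp split: option.splits)
        next
          case (Some b)
          have lb: "length b = dom g" using sem_len2[OF Some] interchange by simp
          show ?thesis using True \<open>sem f' (take (dom f') w) = Some a\<close> Some la lb
            by (simp split: option.splits)
        qed
      qed
    next
      case False
      then show ?thesis by simp
    qed
  qed
qed

lemma sem_zigA: "sem zigA w = None"
proof (cases "length w = 1")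
  case True
  then obtain x where "w = [x]" by (cases w) auto
  then show ?thesis unfolding zigA_def by simp
next
  case False
  then show ?thesis unfolding zigA_def by simp
qed

lemma sem_zigB: "sem zigB w = None"
proof (cases "length w = 1")
  case True
  then obtain x where "w = [x]" by (cases w) auto
  then show ?thesis unfolding zigB_def by simp
next
  case False
  then show ?thesis unfolding zigB_def by simp
qed

lemma sem_loop: "sem (Comp Cap Cup) = sem (Id 0)"
  by (auto simp: fun_eq_iff)

fun ev :: "('a \<Rightarrow> 'k::field) \<Rightarrow> 'a option \<Rightarrow> 'k" where
  "ev F None = 0" | "ev F (Some x) = F x"

lemma ev_bind[simp]: "ev F (Option.bind x g) = ev (\<lambda>z. ev F (g z)) x"
  by (cases x) auto

definition sound :: "(tm \<Rightarrow> 'k::field) \<Rightarrow> bool" where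
  "sound v = (finite (supp v) \<and> (\<forall>w F. (\<Sum>u\<in>supp v. v u * ev F (sem u w)) = 0))"

lemma sum_supp_super: "finite S \<Longrightarrow> supp v \<subseteq> S \<Longrightarrow> (\<Sum>u\<in>S. v u * X u) = (\<Sum>u\<in>supp v. v u * X u)"
  by (rule sum.mono_neutral_right) (auto simp: supp_def)

lemma push_app: "inj c \<Longrightarrow> push c v (c x) = v x"
  unfolding push_def by (simp add: the_inv_f_f)

lemma supp_push: assumes "inj c" shows "supp (push c v) = c ` supp v"
proof
  show "supp (push c v) \<subseteq> c ` supp v"
  proof
    fix u assume "u \<in> supp (push c v)"
    then obtain x where "u = c x" "v x \<noteq> 0" using push_nz[OF assms] unfolding supp_def by blast
    then show "u \<in> c ` supp v" unfolding supp_def by blast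
  qed
  show "c ` supp v \<subseteq> supp (push c v)"
    unfolding supp_def by (auto simp: push_app[OF assms])
qed

lemma sum_push: assumes "inj c" shows "(\<Sum>u\<in>supp (push c v). push c v u * X u) = (\<Sum>x\<in>supp v. v x * X (c x))"
proof -
  have "(\<Sum>u\<in>supp (push c v). push c v u * X u) = (\<Sum>u\<in>c ` supp v. push c v u * X u)"
    unfolding supp_push[OF assms] ..
  also have "\<dots> = (\<Sum>x\<in>supp v. push c v (c x) * X (c x))"
    by (rule sum.reindex_cong[of c]) (use assms in \<open>auto intro: inj_on_subset\<close>)
  also have "\<dots> = (\<Sum>x\<in>supp v. v x * X (c x))"
    by (simp only: push_app[OF assms])
  finally show ?thesis .
qed

lemma sum_delta_diff: "(\<Sum>u\<in>supp (\<lambda>u. delta s u - delta t u). (delta s u - delta t u) * X u) = (X s - X t :: 'k::field)"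
proof -
  have sub: "supp (\<lambda>u. delta s u - delta t u :: 'k) \<subseteq> {s,t}" by (auto simp: supp_def delta_def)
  have "(\<Sum>u\<in>supp (\<lambda>u. delta s u - delta t u). (delta s u - delta t u) * X u)
       = (\<Sum>u\<in>{s,t}. (delta s u - delta t u) * X u)"
    by (rule sum.mono_neutral_left) (auto simp: supp_def delta_def)
  also have "\<dots> = X s - X t"
    by (cases "s = t") (auto simp: delta_def algebra_simps)
  finally show ?thesis .
qed

lemma null_sound: "null m n (v::tm \<Rightarrow> 'k::field) \<Longrightarrow> sound v"
proof (induction rule: null.induct)
  case (null_ax s t m n)
  have fin: "finite (supp (\<lambda>u. delta s u - delta t u :: 'k))"
    by (rule finite_subset[of _ "{s,t}"]) (auto simp: supp_def delta_def)
  show ?case unfolding sound_def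
  proof (intro conjI allI)
    fix w F
    show "(\<Sum>u\<in>supp (\<lambda>u. delta s u - delta t u). (delta s u - delta t u) * ev F (sem u w)) = (0::'k)"
      using sum_delta_diff[of s t "\<lambda>u. ev F (sem u w)"] ax_sem[OF null_ax(1-3)] by simp
  qed (rule fin)
next
  case null_zigA
  have "supp (delta zigA :: tm \<Rightarrow> 'k) = {zigA}" by (auto simp: supp_def delta_def)
  then show ?case unfolding sound_def by (simp add: sem_zigA)
next
  case null_zigB
  have "supp (delta zigB :: tm \<Rightarrow> 'k) = {zigB}" by (auto simp: supp_def delta_def)
  then show ?case unfolding sound_def by (simp add: sem_zigB)
next
  case null_loop
  have fin: "finite (supp (\<lambda>u. delta (Comp Cap Cup) u - delta (Id 0) u :: 'k))"
    by (rule finite_subset[of _ "{Comp Cap Cup, Id 0}"]) (auto simp: supp_def delta_def)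
  show ?case unfolding sound_def
  proof (intro conjI allI)
    fix w F
    show "(\<Sum>u\<in>supp (\<lambda>u. delta (Comp Cap Cup) u - delta (Id 0) u). (delta (Comp Cap Cup) u - delta (Id 0) u) * ev F (sem u w)) = (0::'k)"
      using sum_delta_diff[of "Comp Cap Cup" "Id 0" "\<lambda>u. ev F (sem u w)"] sem_loop by simp
  qed (rule fin)
next
  case (null_zero m n)
  then show ?case by (simp add: sound_def supp_def)
next
  case (null_add m n v w)
  let ?S = "supp v \<union> supp w"
  have fin: "finite ?S" using null_add.IH by (simp add: sound_def)
  have sub: "supp (\<lambda>u. v u + w u) \<subseteq> ?S" by (auto simp: supp_def)
  show ?case unfolding sound_def
  proof (intro conjI allI)
    show "finite (supp (\<lambda>u. v u + w u))" using fin sub finite_subset by blast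
    fix x F
    have "(\<Sum>u\<in>supp (\<lambda>u. v u + w u). (v u + w u) * ev F (sem u x))
        = (\<Sum>u\<in>?S. (v u + w u) * ev F (sem u x))"
      using sum_supp_super[OF fin sub, of "\<lambda>u. ev F (sem u x)"] by simp
    also have "\<dots> = (\<Sum>u\<in>?S. v u * ev F (sem u x)) + (\<Sum>u\<in>?S. w u * ev F (sem u x))"
      by (simp add: algebra_simps sum.distrib)
    also have "\<dots> = (\<Sum>u\<in>supp v. v u * ev F (sem u x)) + (\<Sum>u\<in>supp w. w u * ev F (sem u x))"
      using sum_supp_super[OF fin, of v] sum_supp_super[OF fin, of w] by auto
    also have "\<dots> = 0" using null_add.IH by (simp add: sound_def)
    finally show "(\<Sum>u\<in>supp (\<lambda>u. v u + w u). (v u + w u) * ev F (sem u x)) = 0" .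
  qed
next
  case (null_smult m n v c)
  have fin: "finite (supp v)" using null_smult.IH by (simp add: sound_def)
  have sub: "supp (\<lambda>u. c * v u) \<subseteq> supp v" by (auto simp: supp_def)
  show ?case unfolding sound_def
  proof (intro conjI allI)
    show "finite (supp (\<lambda>u. c * v u))" using fin sub finite_subset by blast
    fix x F
    have "(\<Sum>u\<in>supp (\<lambda>u. c * v u). c * v u * ev F (sem u x))
        = (\<Sum>u\<in>supp v. c * v u * ev F (sem u x))"
      using sum_supp_super[OF fin sub, of "\<lambda>u. ev F (sem u x)"] by simp
    also have "\<dots> = c * (\<Sum>u\<in>supp v. v u * ev F (sem u x))"
      by (simp add: sum_distrib_left algebra_simps)
    also have "\<dots> = 0" using null_smult.IH by (simp add: sound_def)
    finally show "(\<Sum>u\<in>supp (\<lambda>u. c * v u). c * v u * ev F (sem u x)) = 0" .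
  qed
next
  case (null_comp_left m n v g)
  have fin: "finite (supp v)" using null_comp_left.IH by (simp add: sound_def)
  show ?case unfolding sound_def
  proof (intro conjI allI)
    show "finite (supp (push (Comp g) v))" using fin by (simp add: supp_push inj_Comp1)
    fix x F
    have "(\<Sum>u\<in>supp (push (Comp g) v). push (Comp g) v u * ev F (sem u x))
       = (\<Sum>y\<in>supp v. v y * ev F (sem (Comp g y) x))"
      by (rule sum_push[OF inj_Comp1])
    also have "\<dots> = (\<Sum>y\<in>supp v. v y * ev (\<lambda>z. ev F (sem g z)) (sem y x))"
      by (rule sum.cong) (auto split: option.splits)
    also have "\<dots> = 0" using null_comp_left.IH by (simp add: sound_def)
    finally show "(\<Sum>u\<in>supp (push (Comp g) v). push (Comp g) v u * ev F (sem u x)) = 0" .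
  qed
next
  case (null_comp_right m n v f)
  have fin: "finite (supp v)" using null_comp_right.IH by (simp add: sound_def)
  show ?case unfolding sound_def
  proof (intro conjI allI)
    show "finite (supp (push (\<lambda>s. Comp s f) v))" using fin by (simp add: supp_push inj_Comp2)
    fix x F
    have "(\<Sum>u\<in>supp (push (\<lambda>s. Comp s f) v). push (\<lambda>s. Comp s f) v u * ev F (sem u x))
       = (\<Sum>y\<in>supp v. v y * ev F (sem (Comp y f) x))"
      by (rule sum_push[OF inj_Comp2])
    also have "\<dots> = 0"
    proof (cases "sem f x")
      case None
      then show ?thesis by simp
    next
      case (Some z)
      then show ?thesis using null_comp_right.IH by (simp add: sound_def)
    qed
    finally show "(\<Sum>u\<in>supp (push (\<lambda>s. Comp s f) v). push (\<lambda>s. Comp s f) v u * ev F (sem u x)) = 0" .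
  qed
next
  case (null_tens_left m n v h)
  have fin: "finite (supp v)" using null_tens_left.IH by (simp add: sound_def)
  have ty: "\<And>y. y \<in> supp v \<Longrightarrow> dom y = m" using null_typed[OF null_tens_left.hyps(1)] by (auto simp: supp_def)
  show ?case unfolding sound_def
  proof (intro conjI allI)
    show "finite (supp (push (\<lambda>s. Tens s h) v))" using fin by (simp add: supp_push inj_Tens1)
    fix x F
    have "(\<Sum>u\<in>supp (push (\<lambda>s. Tens s h) v). push (\<lambda>s. Tens s h) v u * ev F (sem u x))
       = (\<Sum>y\<in>supp v. v y * ev F (sem (Tens y h) x))"
      by (rule sum_push[OF inj_Tens1])
    also have "\<dots> = 0"
    proof (cases "length x = m + dom h")
      case False
      then show ?thesis using ty by (intro sum.neutral) auto
    next
      case True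
      show ?thesis
      proof (cases "sem h (drop m x)")
        case None
        then show ?thesis using ty True by (intro sum.neutral) (auto split: option.splits)
      next
        case (Some b)
        have "(\<Sum>y\<in>supp v. v y * ev F (sem (Tens y h) x))
            = (\<Sum>y\<in>supp v. v y * ev (\<lambda>a. F (a @ b)) (sem y (take m x)))"
          using ty True Some by (intro sum.cong) (auto split: option.splits)
        also have "\<dots> = 0" using null_tens_left.IH by (simp add: sound_def)
        finally show ?thesis .
      qed
    qed
    finally show "(\<Sum>u\<in>supp (push (\<lambda>s. Tens s h) v). push (\<lambda>s. Tens s h) v u * ev F (sem u x)) = 0" .
  qed
next
  case (null_tens_right m n v h)
  have fin: "finite (supp v)" using null_tens_right.IH by (simp add: sound_def)
  have ty: "\<And>y. y \<in> supp v \<Longrightarrow> dom y = m" using null_typed[OF null_tens_right.hyps(1)] by (auto simp: supp_def)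
  show ?case unfolding sound_def
  proof (intro conjI allI)
    show "finite (supp (push (Tens h) v))" using fin by (simp add: supp_push inj_Tens2)
    fix x F
    have "(\<Sum>u\<in>supp (push (Tens h) v). push (Tens h) v u * ev F (sem u x))
       = (\<Sum>y\<in>supp v. v y * ev F (sem (Tens h y) x))"
      by (rule sum_push[OF inj_Tens2])
    also have "\<dots> = 0"
    proof (cases "length x = dom h + m")
      case False
      then show ?thesis using ty by (intro sum.neutral) auto
    next
      case True
      show ?thesis
      proof (cases "sem h (take (dom h) x)")
        case None
        then show ?thesis using ty True by (intro sum.neutral) (auto split: option.splits)
      next
        case (Some a)
        have "(\<Sum>y\<in>supp v. v y * ev F (sem (Tens h y) x))
            = (\<Sum>y\<in>supp v. v y * ev (\<lambda>b. F (a @ b)) (sem y (drop (dom h) x)))"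
          using ty True Some by (intro sum.cong) (auto split: option.splits)
        also have "\<dots> = 0" using null_tens_right.IH by (simp add: sound_def)
        finally show ?thesis .
      qed
    qed
    finally show "(\<Sum>u\<in>supp (push (Tens h) v). push (Tens h) v u * ev F (sem u x)) = 0" .
  qed
qed

lemma zero_sem: "tl_zero (K::'k::field itself) t \<Longrightarrow> sem t w = None"
proof -
  assume "tl_zero K t"
  then have S: "sound (delta t :: tm \<Rightarrow> 'k)" unfolding tl_zero_def by (rule null_sound)
  have "supp (delta t :: tm \<Rightarrow> 'k) = {t}" by (auto simp: supp_def delta_def)
  then have "ev (\<lambda>_. 1::'k) (sem t w) = 0" using S unfolding sound_def by auto
  then show ?thesis by (cases "sem t w") auto
qed

lemma sound_inst: "sound v \<Longrightarrow> (\<Sum>u\<in>supp v. v u * ev F (sem u w)) = 0"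
  unfolding sound_def by blast

lemma eq_sem: "tl_eq (K::'k::field itself) s t \<Longrightarrow> sem s = sem t"
proof
  fix w
  assume "tl_eq K s t"
  then have S: "sound (\<lambda>u. delta s u - delta t u :: 'k)" unfolding tl_eq_def by (auto intro: null_sound)
  have H: "ev F (sem s w) = ev F (sem t w)" for F :: "bool list \<Rightarrow> 'k"
  proof -
    have "ev F (sem s w) - ev F (sem t w) = 0"
      using trans[OF sum_delta_diff[of s t "\<lambda>u. ev F (sem u w)", symmetric] sound_inst[OF S, of F w]] .
    then show ?thesis by simp
  qed
  show "sem s w = sem t w"
  proof (cases "sem s w")
    case None
    then show ?thesis using H[of "\<lambda>_. 1"] by (cases "sem t w") auto
  next
    case (Some a)
    then show ?thesis using H[of "\<lambda>z. if z = a then 1 else 0"] by (cases "sem t w") (auto split: if_splits)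
  qed
qed



lemma idl: "wt f \<Longrightarrow> n = cod f \<Longrightarrow> tl_eq (K::'k::field itself) (Comp (Id n) f) f"
  by (auto intro!: ax_eq ax.intros)
lemma idr: "wt f \<Longrightarrow> n = dom f \<Longrightarrow> tl_eq (K::'k::field itself) (Comp f (Id n)) f"
  by (auto intro!: ax_eq ax.intros)
lemma cassoc: "wt h \<Longrightarrow> wt g \<Longrightarrow> wt f \<Longrightarrow> dom h = cod g \<Longrightarrow> dom g = cod f \<Longrightarrow>
  tl_eq (K::'k::field itself) (Comp (Comp h g) f) (Comp h (Comp g f))"
  by (auto intro!: ax_eq ax.intros)
lemma tassoc: "wt f \<Longrightarrow> wt g \<Longrightarrow> wt h \<Longrightarrow>
  tl_eq (K::'k::field itself) (Tens (Tens f g) h) (Tens f (Tens g h))"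
  by (auto intro!: ax_eq ax.intros)
lemma unitl: "wt f \<Longrightarrow> tl_eq (K::'k::field itself) (Tens (Id 0) f) f"
  by (auto intro!: ax_eq ax.intros)
lemma unitr: "wt f \<Longrightarrow> tl_eq (K::'k::field itself) (Tens f (Id 0)) f"
  by (auto intro!: ax_eq ax.intros)
lemma tid: "p = m + n \<Longrightarrow> tl_eq (K::'k::field itself) (Tens (Id m) (Id n)) (Id p)"
  by (auto intro!: ax_eq ax.intros)
lemma inter: "wt f \<Longrightarrow> wt g \<Longrightarrow> wt f' \<Longrightarrow> wt g' \<Longrightarrow> dom f = cod f' \<Longrightarrow> dom g = cod g' \<Longrightarrow>
  tl_eq (K::'k::field itself) (Comp (Tens f g) (Tens f' g')) (Tens (Comp f f') (Comp g g'))"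
  by (rule ax_eq) (auto intro: ax.intros)

lemmas tsym = tl_eq_sym

lemma idid: "tl_eq (K::'k::field itself) (Comp (Id n) (Id n)) (Id n)"
  by (rule idl) auto

lemma H1: "wt f \<Longrightarrow> wt g \<Longrightarrow>
  tl_eq (K::'k::field itself) (Tens f g) (Comp (Tens f (Id (cod g))) (Tens (Id (dom f)) g))"
proof -
  assume w: "wt f" "wt g"
  have "tl_eq K (Comp (Tens f (Id (cod g))) (Tens (Id (dom f)) g)) (Tens (Comp f (Id (dom f))) (Comp (Id (cod g)) g))"
    using w by (intro inter) auto
  also have "tl_eq K \<dots> (Tens f g)"
    using w by (intro eq_tens idr idl) auto
  finally show ?thesis by (rule tsym)
qed

lemma H2: "wt f \<Longrightarrow> wt g \<Longrightarrow>
  tl_eq (K::'k::field itself) (Tens f g) (Comp (Tens (Id (cod f)) g) (Tens f (Id (dom g))))"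
proof -
  assume w: "wt f" "wt g"
  have "tl_eq K (Comp (Tens (Id (cod f)) g) (Tens f (Id (dom g)))) (Tens (Comp (Id (cod f)) f) (Comp g (Id (dom g))))"
    using w by (intro inter) auto
  also have "tl_eq K \<dots> (Tens f g)"
    using w by (intro eq_tens idr idl) auto
  finally show ?thesis by (rule tsym)
qed

lemma H3: "wt x \<Longrightarrow> wt y \<Longrightarrow> dom x = cod y \<Longrightarrow>
  tl_eq (K::'k::field itself) (Tens (Id a) (Comp x y)) (Comp (Tens (Id a) x) (Tens (Id a) y))"
proof -
  assume w: "wt x" "wt y" "dom x = cod y"
  have "tl_eq K (Comp (Tens (Id a) x) (Tens (Id a) y)) (Tens (Comp (Id a) (Id a)) (Comp x y))"
    using w by (intro inter) auto
  also have "tl_eq K \<dots> (Tens (Id a) (Comp x y))"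
    using w by (intro eq_tens idid tl_eq_refl) auto
  finally show ?thesis by (rule tsym)
qed

lemma H3': "wt x \<Longrightarrow> wt y \<Longrightarrow> dom x = cod y \<Longrightarrow>
  tl_eq (K::'k::field itself) (Tens (Comp x y) (Id a)) (Comp (Tens x (Id a)) (Tens y (Id a)))"
proof -
  assume w: "wt x" "wt y" "dom x = cod y"
  have "tl_eq K (Comp (Tens x (Id a)) (Tens y (Id a))) (Tens (Comp x y) (Comp (Id a) (Id a)))"
    using w by (intro inter) auto
  also have "tl_eq K \<dots> (Tens (Comp x y) (Id a))"
    using w by (intro eq_tens idid tl_eq_refl) auto
  finally show ?thesis by (rule tsym)
qed

lemma H4: "wt x \<Longrightarrow> p = a + b \<Longrightarrow>
  tl_eq (K::'k::field itself) (Tens (Id a) (Tens (Id b) x)) (Tens (Id p) x)"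
proof -
  assume w: "wt x" "p = a + b"
  have "tl_eq K (Tens (Id a) (Tens (Id b) x)) (Tens (Tens (Id a) (Id b)) x)"
    using w by (intro tsym[OF tassoc]) auto
  also have "tl_eq K \<dots> (Tens (Id p) x)"
    using w by (intro eq_tens tid tl_eq_refl) auto
  finally show ?thesis .
qed

lemma H4': "wt x \<Longrightarrow> p = a + b \<Longrightarrow>
  tl_eq (K::'k::field itself) (Tens (Tens x (Id a)) (Id b)) (Tens x (Id p))"
proof -
  assume w: "wt x" "p = a + b"
  have "tl_eq K (Tens (Tens x (Id a)) (Id b)) (Tens x (Tens (Id a) (Id b)))"
    using w by (intro tassoc) auto
  also have "tl_eq K \<dots> (Tens x (Id p))"
    using w by (intro eq_tens tid tl_eq_refl) auto
  finally show ?thesis .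
qed

lemma block:
  assumes w: "wt f" "wt g"
    and e: "xa = b + cod g + c" "ya = a + dom f + b" "xb = a + cod f + b" "yb = b + dom g + c"
  shows "tl_eq (K::'k::field itself)
     (Comp (Tens (Id a) (Tens f (Id xa))) (Tens (Id ya) (Tens g (Id c))))
     (Comp (Tens (Id xb) (Tens g (Id c))) (Tens (Id a) (Tens f (Id yb))))"
proof -
  let ?G = "Tens (Id b) (Tens g (Id c))"
  let ?T = "Tens (Id a) (Tens f ?G)"
  have wG: "wt ?G" using w by simp
  have A: "tl_eq K ?T (Comp (Tens (Id a) (Tens f (Id xa))) (Tens (Id ya) (Tens g (Id c))))"
  proof -
    have "tl_eq K ?T (Tens (Id a) (Comp (Tens f (Id (cod ?G))) (Tens (Id (dom f)) ?G)))"
      using w wG by (intro eq_tens tl_eq_refl H1) auto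
    also have "tl_eq K \<dots> (Comp (Tens (Id a) (Tens f (Id (cod ?G)))) (Tens (Id a) (Tens (Id (dom f)) ?G)))"
      using w by (intro H3) auto
    also have "tl_eq K \<dots> (Comp (Tens (Id a) (Tens f (Id xa))) (Tens (Id ya) (Tens g (Id c))))"
    proof (rule eq_comp)
      show "tl_eq K (Tens (Id a) (Tens f (Id (cod ?G)))) (Tens (Id a) (Tens f (Id xa)))"
        using e by (simp add: tl_eq_refl add.assoc)
      have "tl_eq K (Tens (Id a) (Tens (Id (dom f)) ?G)) (Tens (Id a) (Tens (Id (dom f + b)) (Tens g (Id c))))"
        using w by (intro eq_tens tl_eq_refl H4) auto
      also have "tl_eq K \<dots> (Tens (Id ya) (Tens g (Id c)))"
        using w e by (intro H4) auto
      finally show "tl_eq K (Tens (Id a) (Tens (Id (dom f)) ?G)) (Tens (Id ya) (Tens g (Id c)))" .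
    qed (use w in auto)
    finally show ?thesis .
  qed
  have B: "tl_eq K ?T (Comp (Tens (Id xb) (Tens g (Id c))) (Tens (Id a) (Tens f (Id yb))))"
  proof -
    have "tl_eq K ?T (Tens (Id a) (Comp (Tens (Id (cod f)) ?G) (Tens f (Id (dom ?G)))))"
      using w wG by (intro eq_tens tl_eq_refl H2) auto
    also have "tl_eq K \<dots> (Comp (Tens (Id a) (Tens (Id (cod f)) ?G)) (Tens (Id a) (Tens f (Id (dom ?G)))))"
      using w by (intro H3) auto
    also have "tl_eq K \<dots> (Comp (Tens (Id xb) (Tens g (Id c))) (Tens (Id a) (Tens f (Id yb))))"
    proof (rule eq_comp)
      show "tl_eq K (Tens (Id a) (Tens f (Id (dom ?G)))) (Tens (Id a) (Tens f (Id yb)))"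
        using e by (simp add: tl_eq_refl add.assoc)
      have "tl_eq K (Tens (Id a) (Tens (Id (cod f)) ?G)) (Tens (Id a) (Tens (Id (cod f + b)) (Tens g (Id c))))"
        using w by (intro eq_tens tl_eq_refl H4) auto
      also have "tl_eq K \<dots> (Tens (Id xb) (Tens g (Id c)))"
        using w e by (intro H4) auto
      finally show "tl_eq K (Tens (Id a) (Tens (Id (cod f)) ?G)) (Tens (Id xb) (Tens g (Id c)))" .
    qed (use w in auto)
    finally show ?thesis .
  qed
  show ?thesis using tl_eq_trans[OF tl_eq_sym[OF A] B] .
qed


section \<open>Layers\<close>

definition cupL :: "nat \<Rightarrow> nat \<Rightarrow> tm" where "cupL s u = Tens (Id u) (Tens Cup (Id (s - u)))"
definition capL :: "nat \<Rightarrow> nat \<Rightarrow> tm" where "capL s c = Tens (Id c) (Tens Cap (Id (s - c)))"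

lemma wt_cupL[simp]: "wt (cupL s u)" by (simp add: cupL_def)
lemma wt_capL[simp]: "wt (capL s u)" by (simp add: capL_def)
lemma dom_cupL[simp]: "u \<le> s \<Longrightarrow> dom (cupL s u) = s" by (simp add: cupL_def)
lemma cod_cupL[simp]: "u \<le> s \<Longrightarrow> cod (cupL s u) = s + 2" by (simp add: cupL_def)
lemma dom_capL[simp]: "u \<le> s \<Longrightarrow> dom (capL s u) = s + 2" by (simp add: capL_def)
lemma cod_capL[simp]: "u \<le> s \<Longrightarrow> cod (capL s u) = s" by (simp add: capL_def)

lemma L_cupcup: assumes "j \<le> u" "u \<le> s" shows
  "tl_eq (K::'k::field itself) (Comp (cupL (s+2) j) (cupL s u)) (Comp (cupL (s+2) (u+2)) (cupL s j))"
proof -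
  have e: "cupL (s+2) j = Tens (Id j) (Tens Cup (Id (s+2-j)))" "cupL s u = Tens (Id u) (Tens Cup (Id (s-u)))"
    "cupL (s+2) (u+2) = Tens (Id (u+2)) (Tens Cup (Id (s-u)))" "cupL s j = Tens (Id j) (Tens Cup (Id (s-j)))"
    by (simp_all add: cupL_def)
  show ?thesis unfolding e
    by (rule block[where b="u-j"]) (use assms in auto)
qed

lemma L_capcap: assumes "c \<le> j" "j \<le> k" shows
  "tl_eq (K::'k::field itself) (Comp (capL k j) (capL (k+2) c)) (Comp (capL k c) (capL (k+2) (j+2)))"
proof -
  have e: "capL k j = Tens (Id j) (Tens Cap (Id (k-j)))" "capL (k+2) c = Tens (Id c) (Tens Cap (Id (k+2-c)))"
    "capL k c = Tens (Id c) (Tens Cap (Id (k-c)))" "capL (k+2) (j+2) = Tens (Id (j+2)) (Tens Cap (Id (k-j)))"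
    by (simp_all add: capL_def)
  show ?thesis unfolding e
    by (rule tsym, rule block[where b="j-c"]) (use assms in auto)
qed

lemma L_farleft: assumes "j + 2 \<le> u" "u \<le> s" shows
  "tl_eq (K::'k::field itself) (Comp (capL s j) (cupL s u)) (Comp (cupL (s-2) (u-2)) (capL (s-2) j))"
proof -
  have e: "capL s j = Tens (Id j) (Tens Cap (Id (s-j)))" "cupL s u = Tens (Id u) (Tens Cup (Id (s-u)))"
    "cupL (s-2) (u-2) = Tens (Id (u-2)) (Tens Cup (Id (s-u)))" "capL (s-2) j = Tens (Id j) (Tens Cap (Id (s-2-j)))"
    using assms by (simp_all add: capL_def cupL_def)
  show ?thesis unfolding e
    by (rule block[where b="u-j-2"]) (use assms in auto)
qed

lemma L_farright: assumes "u + 2 \<le> j" "j \<le> s" shows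
  "tl_eq (K::'k::field itself) (Comp (capL s j) (cupL s u)) (Comp (cupL (s-2) u) (capL (s-2) (j-2)))"
proof -
  have e: "capL s j = Tens (Id j) (Tens Cap (Id (s-j)))" "cupL s u = Tens (Id u) (Tens Cup (Id (s-u)))"
    "cupL (s-2) u = Tens (Id u) (Tens Cup (Id (s-2-u)))" "capL (s-2) (j-2) = Tens (Id (j-2)) (Tens Cap (Id (s-j)))"
    using assms by (simp_all add: capL_def cupL_def)
  show ?thesis unfolding e
    by (rule tsym, rule block[where b="j-u-2"]) (use assms in auto)
qed

lemma loop_eq: "tl_eq (K::'k::field itself) (Comp Cap Cup) (Id 0)"
  unfolding tl_eq_def using null_loop by simp

lemma zigA_zero: "tl_zero (K::'k::field itself) zigA"
  unfolding tl_zero_def using null_zigA by (simp add: zigA_def)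
lemma zigB_zero: "tl_zero (K::'k::field itself) zigB"
  unfolding tl_zero_def using null_zigB by (simp add: zigB_def)

lemma L_cancel: "u \<le> s \<Longrightarrow> tl_eq (K::'k::field itself) (Comp (capL s u) (cupL s u)) (Id s)"
proof -
  assume us: "u \<le> s"
  let ?r = "s - u"
  have "tl_eq K (Comp (capL s u) (cupL s u))
     (Tens (Comp (Id u) (Id u)) (Comp (Tens Cap (Id ?r)) (Tens Cup (Id ?r))))"
    unfolding capL_def cupL_def by (rule inter) auto
  also have "tl_eq K \<dots> (Tens (Id u) (Tens (Comp Cap Cup) (Comp (Id ?r) (Id ?r))))"
    by (intro eq_tens idid inter) auto
  also have "tl_eq K \<dots> (Tens (Id u) (Tens (Id 0) (Id ?r)))"
    by (intro eq_tens idid loop_eq tl_eq_refl) auto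
  also have "tl_eq K \<dots> (Tens (Id u) (Id ?r))"
    by (intro eq_tens unitl tl_eq_refl) auto
  also have "tl_eq K \<dots> (Id s)"
    using us by (intro tid) auto
  finally show ?thesis .
qed

lemma L_zigA: "Suc u \<le> s \<Longrightarrow> tl_zero (K::'k::field itself) (Comp (capL s (Suc u)) (cupL s u))"
proof -
  assume us: "Suc u \<le> s"
  let ?r = "s - u - 1"
  have c1: "tl_eq K (cupL s u) (Tens (Id u) (Tens (Tens Cup (Id 1)) (Id ?r)))"
  proof -
    have "tl_eq K (cupL s u) (Tens (Id u) (Tens Cup (Tens (Id 1) (Id ?r))))"
      unfolding cupL_def using us by (intro eq_tens tl_eq_refl tsym[OF tid]) auto
    also have "tl_eq K \<dots> (Tens (Id u) (Tens (Tens Cup (Id 1)) (Id ?r)))"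
      by (intro eq_tens tl_eq_refl tsym[OF tassoc]) auto
    finally show ?thesis .
  qed
  have c2: "tl_eq K (capL s (Suc u)) (Tens (Id u) (Tens (Tens (Id 1) Cap) (Id ?r)))"
  proof -
    have e: "capL s (Suc u) = Tens (Id (Suc u)) (Tens Cap (Id ?r))" by (simp add: capL_def)
    have "tl_eq K (capL s (Suc u)) (Tens (Id u) (Tens (Id 1) (Tens Cap (Id ?r))))"
      unfolding e by (intro tsym[OF H4]) auto
    also have "tl_eq K \<dots> (Tens (Id u) (Tens (Tens (Id 1) Cap) (Id ?r)))"
      by (intro eq_tens tl_eq_refl tsym[OF tassoc]) auto
    finally show ?thesis .
  qed
  have "tl_eq K (Comp (capL s (Suc u)) (cupL s u))
      (Comp (Tens (Id u) (Tens (Tens (Id 1) Cap) (Id ?r))) (Tens (Id u) (Tens (Tens Cup (Id 1)) (Id ?r))))"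
    using us by (intro eq_comp c1 c2) auto
  also have "tl_eq K \<dots> (Tens (Comp (Id u) (Id u)) (Comp (Tens (Tens (Id 1) Cap) (Id ?r)) (Tens (Tens Cup (Id 1)) (Id ?r))))"
    by (rule inter) auto
  also have "tl_eq K \<dots> (Tens (Comp (Id u) (Id u)) (Tens zigA (Comp (Id ?r) (Id ?r))))"
    unfolding zigA_def by (intro eq_tens tl_eq_refl inter) auto
  finally have E: "tl_eq K (Comp (capL s (Suc u)) (cupL s u)) (Tens (Comp (Id u) (Id u)) (Tens zigA (Comp (Id ?r) (Id ?r))))" .
  have "tl_zero K (Tens (Comp (Id u) (Id u)) (Tens zigA (Comp (Id ?r) (Id ?r))))"
    by (intro zero_tens_right zero_tens_left zigA_zero) auto
  then show ?thesis using E tl_zero_eq by blast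
qed

lemma L_zigB: "Suc j \<le> s \<Longrightarrow> tl_zero (K::'k::field itself) (Comp (capL s j) (cupL s (Suc j)))"
proof -
  assume us: "Suc j \<le> s"
  let ?r = "s - j - 1"
  have c1: "tl_eq K (cupL s (Suc j)) (Tens (Id j) (Tens (Tens (Id 1) Cup) (Id ?r)))"
  proof -
    have e: "cupL s (Suc j) = Tens (Id (Suc j)) (Tens Cup (Id ?r))" by (simp add: cupL_def)
    have "tl_eq K (cupL s (Suc j)) (Tens (Id j) (Tens (Id 1) (Tens Cup (Id ?r))))"
      unfolding e by (intro tsym[OF H4]) auto
    also have "tl_eq K \<dots> (Tens (Id j) (Tens (Tens (Id 1) Cup) (Id ?r)))"
      by (intro eq_tens tl_eq_refl tsym[OF tassoc]) auto
    finally show ?thesis .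
  qed
  have c2: "tl_eq K (capL s j) (Tens (Id j) (Tens (Tens Cap (Id 1)) (Id ?r)))"
  proof -
    have "tl_eq K (capL s j) (Tens (Id j) (Tens Cap (Tens (Id 1) (Id ?r))))"
      unfolding capL_def using us by (intro eq_tens tl_eq_refl tsym[OF tid]) auto
    also have "tl_eq K \<dots> (Tens (Id j) (Tens (Tens Cap (Id 1)) (Id ?r)))"
      by (intro eq_tens tl_eq_refl tsym[OF tassoc]) auto
    finally show ?thesis .
  qed
  have "tl_eq K (Comp (capL s j) (cupL s (Suc j)))
      (Comp (Tens (Id j) (Tens (Tens Cap (Id 1)) (Id ?r))) (Tens (Id j) (Tens (Tens (Id 1) Cup) (Id ?r))))"
    using us by (intro eq_comp c1 c2) auto
  also have "tl_eq K \<dots> (Tens (Comp (Id j) (Id j)) (Comp (Tens (Tens Cap (Id 1)) (Id ?r)) (Tens (Tens (Id 1) Cup) (Id ?r))))"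
    by (rule inter) auto
  also have "tl_eq K \<dots> (Tens (Comp (Id j) (Id j)) (Tens zigB (Comp (Id ?r) (Id ?r))))"
    unfolding zigB_def by (intro eq_tens tl_eq_refl inter) auto
  finally have E: "tl_eq K (Comp (capL s j) (cupL s (Suc j))) (Tens (Comp (Id j) (Id j)) (Tens zigB (Comp (Id ?r) (Id ?r))))" .
  have "tl_zero K (Tens (Comp (Id j) (Id j)) (Tens zigB (Comp (Id ?r) (Id ?r))))"
    by (intro zero_tens_right zero_tens_left zigB_zero) auto
  then show ?thesis using E tl_zero_eq by blast
qed



section \<open>Words of layers\<close>

fun lay :: "nat \<Rightarrow> bool \<times> nat \<Rightarrow> tm" where
  "lay k (b, i) = (if b then cupL k i else capL (k - 2) i)"

fun nxt :: "nat \<Rightarrow> bool \<times> nat \<Rightarrow> nat" where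
  "nxt k (b, i) = (if b then k + 2 else k - 2)"

fun lok :: "nat \<Rightarrow> bool \<times> nat \<Rightarrow> bool" where
  "lok k (b, i) = (if b then i \<le> k else i + 2 \<le> k)"

fun wcod :: "nat \<Rightarrow> (bool \<times> nat) list \<Rightarrow> nat" where
  "wcod k [] = k"
| "wcod k (g # gs) = wcod (nxt k g) gs"

fun wvalid :: "nat \<Rightarrow> (bool \<times> nat) list \<Rightarrow> bool" where
  "wvalid k [] = True"
| "wvalid k (g # gs) = (lok k g \<and> wvalid (nxt k g) gs)"

fun wordT :: "nat \<Rightarrow> (bool \<times> nat) list \<Rightarrow> tm" where
  "wordT k [] = Id k"
| "wordT k (g # gs) = Comp (wordT (nxt k g) gs) (lay k g)"

lemma lay_props: "lok k g \<Longrightarrow> wt (lay k g) \<and> dom (lay k g) = k \<and> cod (lay k g) = nxt k g"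
  by (cases g) auto

lemma word_props: "wvalid k gs \<Longrightarrow> wt (wordT k gs) \<and> dom (wordT k gs) = k \<and> cod (wordT k gs) = wcod k gs"
  by (induction k gs rule: wordT.induct) (auto dest: lay_props)

lemma wvalid_append: "wvalid k (a @ b) = (wvalid k a \<and> wvalid (wcod k a) b)"
  by (induction k a rule: wcod.induct) auto

lemma wcod_append: "wcod k (a @ b) = wcod (wcod k a) b"
  by (induction k a rule: wcod.induct) auto

lemma word_append: "wvalid k (a @ b) \<Longrightarrow>
  tl_eq (K::'k::field itself) (wordT k (a @ b)) (Comp (wordT (wcod k a) b) (wordT k a))"
proof (induction k a rule: wcod.induct)
  case (1 k)
  then show ?case using word_props[of k b] by (auto intro!: tsym[OF idr])
next
  case (2 k g gs)
  have v: "lok k g" "wvalid (nxt k g) (gs @ b)" using 2(2) by auto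
  have v1: "wvalid (nxt k g) gs" "wvalid (wcod (nxt k g) gs) b" using v(2) wvalid_append by auto
  note p1 = word_props[OF v1(1)] and p2 = word_props[OF v1(2)] and p3 = lay_props[OF v(1)]
  have "tl_eq K (wordT k ((g # gs) @ b)) (Comp (wordT (nxt k g) (gs @ b)) (lay k g))" by (simp add: tl_eq_refl)
  also have "tl_eq K \<dots> (Comp (Comp (wordT (wcod (nxt k g) gs) b) (wordT (nxt k g) gs)) (lay k g))"
    using 2(1)[OF v(2)] word_props[OF v(2)] p3 by (intro eq_comp tl_eq_refl) auto
  also have "tl_eq K \<dots> (Comp (wordT (wcod (nxt k g) gs) b) (Comp (wordT (nxt k g) gs) (lay k g)))"
    using p1 p2 p3 by (intro cassoc) auto
  finally show ?case by simp
qed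

fun shiftg :: "nat \<Rightarrow> bool \<times> nat \<Rightarrow> bool \<times> nat" where
  "shiftg q (b, i) = (b, q + i)"

lemma nxt_add: "lok k g \<Longrightarrow> nxt (k + p) g = nxt k g + p"
  by (cases g) auto
lemma nxt_shift: "lok k g \<Longrightarrow> nxt (q + k) (shiftg q g) = q + nxt k g"
  by (cases g) auto
lemma lok_add: "lok k g \<Longrightarrow> lok (k + p) g"
  by (cases g) auto
lemma lok_shift: "lok k g \<Longrightarrow> lok (q + k) (shiftg q g)"
  by (cases g) auto

lemma wvalid_add: "wvalid k gs \<Longrightarrow> wvalid (k + p) gs \<and> wcod (k + p) gs = wcod k gs + p"
  by (induction k gs rule: wcod.induct) (auto simp: nxt_add lok_add)

lemma wvalid_shift: "wvalid k gs \<Longrightarrow> wvalid (q + k) (map (shiftg q) gs) \<and> wcod (q + k) (map (shiftg q) gs) = q + wcod k gs"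
  by (induction k gs rule: wcod.induct) (auto simp: nxt_shift lok_shift)

lemma lay_add: "lok k g \<Longrightarrow> tl_eq (K::'k::field itself) (Tens (lay k g) (Id p)) (lay (k + p) g)"
proof (cases g)
  case (Pair b i)
  assume ok: "lok k g"
  show ?thesis
  proof (cases b)
    case True
    then have ik: "i \<le> k" using ok Pair by simp
    have "tl_eq K (Tens (Tens (Id i) (Tens Cup (Id (k - i)))) (Id p)) (Tens (Id i) (Tens (Tens Cup (Id (k - i))) (Id p)))"
      by (intro tassoc) auto
    also have "tl_eq K \<dots> (Tens (Id i) (Tens Cup (Tens (Id (k - i)) (Id p))))"
      by (intro eq_tens tl_eq_refl tassoc) auto
    also have "tl_eq K \<dots> (Tens (Id i) (Tens Cup (Id (k + p - i))))"
      using ik by (intro eq_tens tl_eq_refl tid) auto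
    finally show ?thesis using Pair True by (simp add: cupL_def)
  next
    case False
    then have ik: "i + 2 \<le> k" using ok Pair by simp
    have "tl_eq K (Tens (Tens (Id i) (Tens Cap (Id (k - 2 - i)))) (Id p)) (Tens (Id i) (Tens (Tens Cap (Id (k - 2 - i))) (Id p)))"
      by (intro tassoc) auto
    also have "tl_eq K \<dots> (Tens (Id i) (Tens Cap (Tens (Id (k - 2 - i)) (Id p))))"
      by (intro eq_tens tl_eq_refl tassoc) auto
    also have "tl_eq K \<dots> (Tens (Id i) (Tens Cap (Id (k + p - 2 - i))))"
      using ik by (intro eq_tens tl_eq_refl tid) auto
    finally show ?thesis using Pair False by (simp add: capL_def)
  qed
qed

lemma lay_shift: "lok k g \<Longrightarrow> tl_eq (K::'k::field itself) (Tens (Id q) (lay k g)) (lay (q + k) (shiftg q g))"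
proof (cases g)
  case (Pair b i)
  assume ok: "lok k g"
  show ?thesis
  proof (cases b)
    case True
    have "tl_eq K (Tens (Id q) (Tens (Id i) (Tens Cup (Id (k - i))))) (Tens (Id (q + i)) (Tens Cup (Id (k - i))))"
      by (intro H4) auto
    then show ?thesis using Pair True by (simp add: cupL_def)
  next
    case False
    have "tl_eq K (Tens (Id q) (Tens (Id i) (Tens Cap (Id (k - 2 - i))))) (Tens (Id (q + i)) (Tens Cap (Id (k - 2 - i))))"
      by (intro H4) auto
    then show ?thesis using Pair False by (simp add: capL_def)
  qed
qed

lemma word_add: "wvalid k gs \<Longrightarrow> tl_eq (K::'k::field itself) (Tens (wordT k gs) (Id p)) (wordT (k + p) gs)"
proof (induction k gs rule: wordT.induct)
  case (1 k)
  then show ?case by (simp add: tid)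
next
  case (2 k g gs)
  have v: "lok k g" "wvalid (nxt k g) gs" using 2(2) by auto
  note p1 = word_props[OF v(2)] and p3 = lay_props[OF v(1)]
  have "tl_eq K (Tens (wordT k (g # gs)) (Id p)) (Comp (Tens (wordT (nxt k g) gs) (Id p)) (Tens (lay k g) (Id p)))"
    using p1 p3 by (simp add: H3')
  also have "tl_eq K \<dots> (Comp (wordT (nxt k g + p) gs) (lay (k + p) g))"
    using p1 p3 2(1)[OF v(2)] lay_add[OF v(1)] by (intro eq_comp) auto
  finally show ?case by (simp add: nxt_add[OF v(1)])
qed

lemma word_shift: "wvalid k gs \<Longrightarrow> tl_eq (K::'k::field itself) (Tens (Id q) (wordT k gs)) (wordT (q + k) (map (shiftg q) gs))"
proof (induction k gs rule: wordT.induct)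
  case (1 k)
  then show ?case by (simp add: tid)
next
  case (2 k g gs)
  have v: "lok k g" "wvalid (nxt k g) gs" using 2(2) by auto
  note p1 = word_props[OF v(2)] and p3 = lay_props[OF v(1)]
  have "tl_eq K (Tens (Id q) (wordT k (g # gs))) (Comp (Tens (Id q) (wordT (nxt k g) gs)) (Tens (Id q) (lay k g)))"
    using p1 p3 by (simp add: H3)
  also have "tl_eq K \<dots> (Comp (wordT (q + nxt k g) (map (shiftg q) gs)) (lay (q + k) (shiftg q g)))"
    using p1 p3 2(1)[OF v(2)] lay_shift[OF v(1)] by (intro eq_comp) auto
  finally show ?case by (simp add: nxt_shift[OF v(1)])
qed

lemma term_word: "wt t \<Longrightarrow> \<exists>gs. wvalid (dom t) gs \<and> tl_eq (K::'k::field itself) t (wordT (dom t) gs)"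
proof (induction t)
  case Cup
  have "tl_eq K Cup (Tens (Id 0) (Tens Cup (Id 0)))"
  proof -
    have "tl_eq K (Tens (Id 0) (Tens Cup (Id 0))) (Tens Cup (Id 0))" by (intro unitl) auto
    also have "tl_eq K \<dots> Cup" by (intro unitr) auto
    finally show ?thesis by (rule tsym)
  qed
  also have "tl_eq K \<dots> (Comp (Id 2) (Tens (Id 0) (Tens Cup (Id 0))))"
    by (intro tsym[OF idl]) auto
  finally have "tl_eq K Cup (wordT 0 [(True, 0)])" by (simp add: cupL_def numeral_2_eq_2)
  then show ?case by (intro exI[of _ "[(True, 0)]"] conjI) simp_all
next
  case Cap
  have "tl_eq K Cap (Tens (Id 0) (Tens Cap (Id 0)))"
  proof -
    have "tl_eq K (Tens (Id 0) (Tens Cap (Id 0))) (Tens Cap (Id 0))" by (intro unitl) auto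
    also have "tl_eq K \<dots> Cap" by (intro unitr) auto
    finally show ?thesis by (rule tsym)
  qed
  also have "tl_eq K \<dots> (Comp (Id 0) (Tens (Id 0) (Tens Cap (Id 0))))"
    by (intro tsym[OF idl]) auto
  finally have "tl_eq K Cap (wordT 2 [(False, 0)])" by (simp add: capL_def)
  then show ?case by (intro exI[of _ "[(False, 0)]"] conjI) simp_all
next
  case (Id n)
  then show ?case by (intro exI[of _ "[]"]) (auto simp: tl_eq_refl)
next
  case (Comp g f)
  then have w: "wt g" "wt f" "dom g = cod f" by auto
  obtain gf where gf: "wvalid (dom f) gf" "tl_eq K f (wordT (dom f) gf)" using Comp.IH(2) w by blast
  obtain gg where gg: "wvalid (dom g) gg" "tl_eq K g (wordT (dom g) gg)" using Comp.IH(1) w by blast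
  have c: "wcod (dom f) gf = cod f" using gf(2) word_props[OF gf(1)] by (simp add: tl_eq_def)
  have v: "wvalid (dom f) (gf @ gg)" using gf gg c w by (simp add: wvalid_append)
  have "tl_eq K (Comp g f) (Comp (wordT (dom g) gg) (wordT (dom f) gf))"
    using gf gg w by (intro eq_comp) auto
  also have "tl_eq K \<dots> (wordT (dom f) (gf @ gg))"
    by (rule tsym) (use word_append[OF v] c w in simp)
  finally show ?case using v by auto
next
  case (Tens f g)
  then have w: "wt g" "wt f" by auto
  obtain gf where gf: "wvalid (dom f) gf" "tl_eq K f (wordT (dom f) gf)" using Tens.IH(1) w by blast
  obtain gg where gg: "wvalid (dom g) gg" "tl_eq K g (wordT (dom g) gg)" using Tens.IH(2) w by blast
  have c: "wcod (dom f) gf = cod f" using gf(2) word_props[OF gf(1)] by (simp add: tl_eq_def)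
  have cg: "wcod (dom g) gg = cod g" using gg(2) word_props[OF gg(1)] by (simp add: tl_eq_def)
  note A = wvalid_add[OF gf(1), of "dom g"]
  note S = wvalid_shift[OF gg(1), of "cod f"]
  have v: "wvalid (dom f + dom g) (gf @ map (shiftg (cod f)) gg)"
    using A S c by (simp add: wvalid_append)
  have "tl_eq K (Tens f g) (Comp (Tens (Id (cod f)) g) (Tens f (Id (dom g))))"
    using w by (intro H2) auto
  also have "tl_eq K \<dots> (Comp (Tens (Id (cod f)) (wordT (dom g) gg)) (Tens (wordT (dom f) gf) (Id (dom g))))"
    using w gf gg by (intro eq_comp eq_tens tl_eq_refl) auto
  also have "tl_eq K \<dots> (Comp (wordT (cod f + dom g) (map (shiftg (cod f)) gg)) (wordT (dom f + dom g) gf))"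
    using word_shift[OF gg(1)] word_add[OF gf(1)] word_props[OF gf(1)] word_props[OF gg(1)] c
    by (intro eq_comp) auto
  also have "tl_eq K \<dots> (wordT (dom f + dom g) (gf @ map (shiftg (cod f)) gg))"
    by (rule tsym) (use word_append[OF v] A c in simp)
  finally show ?case using v by auto
qed



section \<open>Canonical forms\<close>

fun capsT :: "nat \<Rightarrow> nat list \<Rightarrow> tm" where
  "capsT k [] = Id k"
| "capsT k (c # cs) = Comp (capL k c) (capsT (k + 2) cs)"

fun cupsR :: "nat \<Rightarrow> nat list \<Rightarrow> tm" where
  "cupsR k [] = Id k"
| "cupsR k (u # R) = Comp (cupL (k + 2 * length R) u) (cupsR k R)"

fun incr :: "nat \<Rightarrow> nat list \<Rightarrow> bool" where
  "incr k [] = True"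
| "incr k (c # cs) = (c \<le> k \<and> (\<forall>x\<in>set cs. c < x) \<and> incr (k + 2) cs)"

fun decr :: "nat \<Rightarrow> nat list \<Rightarrow> bool" where
  "decr k [] = True"
| "decr k (u # R) = (u \<le> k + 2 * length R \<and> (\<forall>x\<in>set R. x < u) \<and> decr k R)"

lemma capsT_props: "incr k C \<Longrightarrow> wt (capsT k C) \<and> dom (capsT k C) = k + 2 * length C \<and> cod (capsT k C) = k"
  by (induction C arbitrary: k) auto

lemma cupsR_props: "decr k R \<Longrightarrow> wt (cupsR k R) \<and> dom (cupsR k R) = k \<and> cod (cupsR k R) = k + 2 * length R"
  by (induction R) auto

fun ins :: "nat \<Rightarrow> nat list \<Rightarrow> nat list" where
  "ins j [] = [j]"
| "ins j (u # R) = (if u < j then j # u # R else (u + 2) # ins j R)"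

lemma ins_lem: "decr k R \<Longrightarrow> j \<le> k + 2 * length R \<Longrightarrow>
  tl_eq (K::'k::field itself) (Comp (cupL (k + 2 * length R) j) (cupsR k R)) (cupsR k (ins j R))
  \<and> decr k (ins j R) \<and> length (ins j R) = Suc (length R)
  \<and> (\<forall>x\<in>set (ins j R). x \<le> j \<or> (\<exists>r\<in>set R. x \<le> r + 2))"
proof (induction R)
  case Nil
  then show ?case by (simp add: tl_eq_refl)
next
  case (Cons u R)
  let ?s = "k + 2 * length R"
  have d: "u \<le> ?s" "\<forall>x\<in>set R. x < u" "decr k R" using Cons.prems by auto
  note pX = cupsR_props[OF d(3)]
  show ?case
  proof (cases "u < j")
    case True
    then show ?thesis using Cons.prems d by (auto simp: tl_eq_refl)
  next
    case False
    then have ju: "j \<le> u" by simp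
    note IH = Cons.IH[OF d(3)] 
    have IH': "tl_eq K (Comp (cupL ?s j) (cupsR k R)) (cupsR k (ins j R))"
      "decr k (ins j R)" "length (ins j R) = Suc (length R)"
      "\<forall>x\<in>set (ins j R). x \<le> j \<or> (\<exists>r\<in>set R. x \<le> r + 2)"
      using IH ju d(1) by auto
    have e: "k + 2 * length (u # R) = ?s + 2" by simp
    have "tl_eq K (Comp (cupL (?s + 2) j) (Comp (cupL ?s u) (cupsR k R)))
        (Comp (Comp (cupL (?s + 2) j) (cupL ?s u)) (cupsR k R))"
      using ju d pX by (intro tsym[OF cassoc]) auto
    also have "tl_eq K \<dots> (Comp (Comp (cupL (?s + 2) (u + 2)) (cupL ?s j)) (cupsR k R))"
      using ju d pX by (intro eq_comp L_cupcup tl_eq_refl) auto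
    also have "tl_eq K \<dots> (Comp (cupL (?s + 2) (u + 2)) (Comp (cupL ?s j) (cupsR k R)))"
      using ju d pX by (intro cassoc) auto
    also have "tl_eq K \<dots> (Comp (cupL (?s + 2) (u + 2)) (cupsR k (ins j R)))"
      using ju d pX IH' by (intro eq_comp tl_eq_refl) auto
    finally have T: "tl_eq K (Comp (cupL (?s + 2) j) (Comp (cupL ?s u) (cupsR k R)))
        (Comp (cupL (?s + 2) (u + 2)) (cupsR k (ins j R)))" .
    have hd: "\<forall>x\<in>set (ins j R). x < u + 2" using IH'(4) d(2) ju by fastforce
    show ?thesis using T IH' hd d False e by (auto simp: algebra_simps)
  qed
qed

fun insF :: "nat \<Rightarrow> nat list \<Rightarrow> nat list" where
  "insF j [] = [j]"
| "insF j (c # cs) = (if j < c then j # c # cs else c # insF (j + 2) cs)"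

lemma insF_lem: "incr (k + 2) C \<Longrightarrow> j \<le> k \<Longrightarrow>
  tl_eq (K::'k::field itself) (Comp (capL k j) (capsT (k + 2) C)) (capsT k (insF j C))
  \<and> incr k (insF j C) \<and> length (insF j C) = Suc (length C)
  \<and> (\<forall>x\<in>set (insF j C). j \<le> x \<or> x \<in> set C)"
proof (induction C arbitrary: j k)
  case Nil
  then show ?case by (simp add: tl_eq_refl)
next
  case (Cons c cs)
  have d: "c \<le> k + 2" "\<forall>x\<in>set cs. c < x" "incr (k + 2 + 2) cs" using Cons.prems(1) unfolding incr.simps by blast+
  note pY = capsT_props[OF d(3)]
  show ?case
  proof (cases "j < c")
    case True
    then show ?thesis using Cons.prems d by (auto simp: tl_eq_refl)
  next
    case False
    then have cj: "c \<le> j" by simp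
    have IH': "tl_eq K (Comp (capL (k + 2) (j + 2)) (capsT (k + 2 + 2) cs)) (capsT (k + 2) (insF (j + 2) cs))"
      "incr (k + 2) (insF (j + 2) cs)" "length (insF (j + 2) cs) = Suc (length cs)"
      "\<forall>x\<in>set (insF (j + 2) cs). j + 2 \<le> x \<or> x \<in> set cs"
      using Cons.IH[of "k + 2" "j + 2", OF d(3)] Cons.prems(2) by auto
    have "tl_eq K (Comp (capL k j) (Comp (capL (k + 2) c) (capsT (k + 2 + 2) cs)))
        (Comp (Comp (capL k j) (capL (k + 2) c)) (capsT (k + 2 + 2) cs))"
      using cj Cons.prems d pY by (intro tsym[OF cassoc]) auto
    also have "tl_eq K \<dots> (Comp (Comp (capL k c) (capL (k + 2) (j + 2))) (capsT (k + 2 + 2) cs))"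
      using cj Cons.prems d pY by (intro eq_comp L_capcap tl_eq_refl) auto
    also have "tl_eq K \<dots> (Comp (capL k c) (Comp (capL (k + 2) (j + 2)) (capsT (k + 2 + 2) cs)))"
      using cj Cons.prems d pY by (intro cassoc) auto
    also have "tl_eq K \<dots> (Comp (capL k c) (capsT (k + 2) (insF (j + 2) cs)))"
      using cj Cons.prems d pY IH' capsT_props[OF IH'(2)] by (intro eq_comp tl_eq_refl) auto
    finally have T: "tl_eq K (Comp (capL k j) (Comp (capL (k + 2) c) (capsT (k + 2 + 2) cs)))
        (Comp (capL k c) (capsT (k + 2) (insF (j + 2) cs)))" .
    have gt: "\<forall>x\<in>set (insF (j + 2) cs). c < x" using IH'(4) d(2) cj by fastforce
    have e: "k + 2 + 2 = k + 4" by simp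
    show ?thesis using T IH' gt cj Cons.prems(2) False by (auto simp: e)
  qed
qed


datatype pres = PZero | PCanc "nat list" | PPass nat "nat list"

fun pcons :: "nat \<Rightarrow> pres \<Rightarrow> pres" where
  "pcons x PZero = PZero"
| "pcons x (PCanc R) = PCanc (x # R)"
| "pcons x (PPass j R) = PPass j (x # R)"

fun pc :: "nat \<Rightarrow> nat list \<Rightarrow> pres" where
  "pc j [] = PPass j []"
| "pc j (u # R) = (if j = u then PCanc R else if j = Suc u \<or> u = Suc j then PZero
     else if j + 2 \<le> u then pcons (u - 2) (pc j R) else pcons u (pc (j - 2) R))"

definition pinv :: "nat \<Rightarrow> nat list \<Rightarrow> nat list \<Rightarrow> bool" where
  "pinv j R R' = (\<forall>x\<in>set R'. (x \<in> set R \<and> x < j) \<or> x + 2 \<in> set R)"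

definition pgood :: "'k::field itself \<Rightarrow> nat \<Rightarrow> nat \<Rightarrow> nat list \<Rightarrow> pres \<Rightarrow> bool" where
  "pgood K k j R r = (let T = Comp (capL (k + 2 * length R - 2) j) (cupsR k R) in
   (case r of
     PZero \<Rightarrow> tl_zero K T
   | PCanc R' \<Rightarrow> tl_eq K T (cupsR k R') \<and> decr k R' \<and> Suc (length R') = length R \<and> pinv j R R'
   | PPass j' R' \<Rightarrow> tl_eq K T (Comp (cupsR (k - 2) R') (capL (k - 2) j')) \<and> j' + 2 \<le> k
        \<and> decr (k - 2) R' \<and> length R' = length R \<and> pinv j R R'))"

lemma pc_lem: "decr k R \<Longrightarrow> j + 2 \<le> k + 2 * length R \<Longrightarrow> pgood (K::'k::field itself) k j R (pc j R)"
proof (induction R arbitrary: j)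
  case Nil
  then have jk: "j + 2 \<le> k" by simp
  have "tl_eq K (Comp (capL (k - 2) j) (Id k)) (capL (k - 2) j)"
    using jk by (intro idr) auto
  also have "tl_eq K \<dots> (Comp (Id (k - 2)) (capL (k - 2) j))"
    using jk by (intro tsym[OF idl]) auto
  finally show ?case using jk by (simp add: pgood_def pinv_def)
next
  case (Cons u R)
  let ?s = "k + 2 * length R"
  let ?X = "cupsR k R"
  have d: "u \<le> ?s" "\<forall>x\<in>set R. x < u" "decr k R" using Cons.prems by auto
  have js: "j \<le> ?s" using Cons.prems by simp
  note pX = cupsR_props[OF d(3)]
  have e: "k + 2 * length (u # R) - 2 = ?s" by simp
  have T0: "tl_eq K (Comp (capL ?s j) (Comp (cupL ?s u) ?X)) (Comp (Comp (capL ?s j) (cupL ?s u)) ?X)"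
    using d js pX by (intro tsym[OF cassoc]) auto
  show ?case
  proof (cases "j = u")
    case True
    have "tl_eq K (Comp (Comp (capL ?s j) (cupL ?s u)) ?X) (Comp (Id ?s) ?X)"
      unfolding True using d pX by (intro eq_comp L_cancel tl_eq_refl) auto
    also have "tl_eq K \<dots> ?X" using pX by (intro idl) auto
    finally have "tl_eq K (Comp (capL ?s j) (Comp (cupL ?s u) ?X)) ?X" using T0 tl_eq_trans by blast
    then show ?thesis using True d by (auto simp: pgood_def pinv_def Let_def)
  next
    case ne: False
    show ?thesis
    proof (cases "j = Suc u \<or> u = Suc j")
      case True
      have Z: "tl_zero K (Comp (capL ?s j) (cupL ?s u))"
        using True d js L_zigA[of u ?s K] L_zigB[of j ?s K] by auto
      have "tl_zero K (Comp (Comp (capL ?s j) (cupL ?s u)) ?X)"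
        using pX d js by (intro zero_comp_right[OF Z]) auto
      then have "tl_zero K (Comp (capL ?s j) (Comp (cupL ?s u) ?X))" using T0 tl_zero_eq by blast
      then show ?thesis using True ne by (simp add: pgood_def Let_def)
    next
      case nz: False
      show ?thesis
      proof (cases "j + 2 \<le> u")
        case True
        have T1: "tl_eq K (Comp (capL ?s j) (Comp (cupL ?s u) ?X)) (Comp (cupL (?s - 2) (u - 2)) (Comp (capL (?s - 2) j) ?X))"
        proof -
          have "tl_eq K (Comp (Comp (capL ?s j) (cupL ?s u)) ?X) (Comp (Comp (cupL (?s - 2) (u - 2)) (capL (?s - 2) j)) ?X)"
            using True d pX by (intro eq_comp L_farleft tl_eq_refl) auto
          also have "tl_eq K \<dots> (Comp (cupL (?s - 2) (u - 2)) (Comp (capL (?s - 2) j) ?X))"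
            using True d pX by (intro cassoc) auto
          finally show ?thesis using T0 tl_eq_trans by blast
        qed
        have jR: "j + 2 \<le> k + 2 * length R" using True d by simp
        have G: "pgood K k j R (pc j R)" by (rule Cons.IH[OF d(3) jR])
        have pcu: "pc j (u # R) = pcons (u - 2) (pc j R)" using True ne nz by simp
        show ?thesis
        proof (cases "pc j R")
          case PZero
          then have "tl_zero K (Comp (capL (?s - 2) j) ?X)" using G by (simp add: pgood_def)
          then have "tl_zero K (Comp (cupL (?s - 2) (u - 2)) (Comp (capL (?s - 2) j) ?X))"
            using True d pX by (intro zero_comp_left[OF \<open>tl_zero K (Comp (capL (?s - 2) j) ?X)\<close>]) auto
          then show ?thesis using T1 tl_zero_eq pcu PZero by (simp add: pgood_def) blast
        next
          case (PCanc R')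
          then have g: "tl_eq K (Comp (capL (?s - 2) j) ?X) (cupsR k R')" "decr k R'"
            "Suc (length R') = length R" "pinv j R R'" using G by (simp_all add: pgood_def)
          have l: "k + 2 * length R' = ?s - 2" using g(3) by auto
          have "tl_eq K (Comp (cupL (?s - 2) (u - 2)) (Comp (capL (?s - 2) j) ?X)) (Comp (cupL (?s - 2) (u - 2)) (cupsR k R'))"
            using True d pX tl_eq_wt[OF g(1)] cupsR_props[OF g(2)] l by (intro eq_comp[OF tl_eq_refl g(1)]) auto
          then have t: "tl_eq K (Comp (capL ?s j) (Comp (cupL ?s u) ?X)) (cupsR k ((u - 2) # R'))"
            using T1 tl_eq_trans l by simp blast
          have inv: "pinv j (u # R) ((u - 2) # R')" using g(4) True d unfolding pinv_def by auto
          have lt: "\<forall>x\<in>set R'. x < u - 2" using g(4) d(2) True unfolding pinv_def by fastforce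
          have dd: "decr k ((u - 2) # R')" using g(2,3) lt d(1) by auto
          show ?thesis using t inv dd g(3) pcu PCanc by (simp add: pgood_def)
        next
          case (PPass j' R')
          then have g: "tl_eq K (Comp (capL (?s - 2) j) ?X) (Comp (cupsR (k - 2) R') (capL (k - 2) j'))"
            "j' + 2 \<le> k" "decr (k - 2) R'" "length R' = length R" "pinv j R R'" using G by (simp_all add: pgood_def)
          have l: "k - 2 + 2 * length R' = ?s - 2" using g(2,4) by auto
          note pR = cupsR_props[OF g(3)]
          have "tl_eq K (Comp (cupL (?s - 2) (u - 2)) (Comp (capL (?s - 2) j) ?X))
              (Comp (cupL (?s - 2) (u - 2)) (Comp (cupsR (k - 2) R') (capL (k - 2) j')))"
            using True d pX tl_eq_wt[OF g(1)] pR l by (intro eq_comp[OF tl_eq_refl g(1)]) auto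
          also have "tl_eq K \<dots> (Comp (Comp (cupL (?s - 2) (u - 2)) (cupsR (k - 2) R')) (capL (k - 2) j'))"
            using True d g pR l by (intro tsym[OF cassoc]) auto
          finally have t: "tl_eq K (Comp (capL ?s j) (Comp (cupL ?s u) ?X)) (Comp (cupsR (k - 2) ((u - 2) # R')) (capL (k - 2) j'))"
            using T1 tl_eq_trans l by simp blast
          have inv: "pinv j (u # R) ((u - 2) # R')" using g(5) True d unfolding pinv_def by auto
          have lt: "\<forall>x\<in>set R'. x < u - 2" using g(5) d(2) True unfolding pinv_def by fastforce
          have dd: "decr (k - 2) ((u - 2) # R')" using g(2,3,4) lt d(1) by auto
          show ?thesis using t inv dd g(2,4) pcu PPass by (simp add: pgood_def)
        qed
      next
        case False
        then have uj: "u + 2 \<le> j" using ne nz by auto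
        have T1: "tl_eq K (Comp (capL ?s j) (Comp (cupL ?s u) ?X)) (Comp (cupL (?s - 2) u) (Comp (capL (?s - 2) (j - 2)) ?X))"
        proof -
          have "tl_eq K (Comp (Comp (capL ?s j) (cupL ?s u)) ?X) (Comp (Comp (cupL (?s - 2) u) (capL (?s - 2) (j - 2))) ?X)"
            using uj js d pX by (intro eq_comp L_farright tl_eq_refl) auto
          also have "tl_eq K \<dots> (Comp (cupL (?s - 2) u) (Comp (capL (?s - 2) (j - 2)) ?X))"
            using uj js d pX by (intro cassoc) auto
          finally show ?thesis using T0 tl_eq_trans by blast
        qed
        have jR: "j - 2 + 2 \<le> k + 2 * length R" using uj js by simp
        have G: "pgood K k (j - 2) R (pc (j - 2) R)" by (rule Cons.IH[OF d(3) jR])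
        have pcu: "pc j (u # R) = pcons u (pc (j - 2) R)" using False ne nz by simp
        show ?thesis
        proof (cases "pc (j - 2) R")
          case PZero
          then have "tl_zero K (Comp (capL (?s - 2) (j - 2)) ?X)" using G by (simp add: pgood_def)
          then have "tl_zero K (Comp (cupL (?s - 2) u) (Comp (capL (?s - 2) (j - 2)) ?X))"
            using uj js d pX by (intro zero_comp_left[OF \<open>tl_zero K (Comp (capL (?s - 2) (j - 2)) ?X)\<close>]) auto
          then show ?thesis using T1 tl_zero_eq pcu PZero by (simp add: pgood_def) blast
        next
          case (PCanc R')
          then have g: "tl_eq K (Comp (capL (?s - 2) (j - 2)) ?X) (cupsR k R')" "decr k R'"
            "Suc (length R') = length R" "pinv (j - 2) R R'" using G by (simp_all add: pgood_def)
          have l: "k + 2 * length R' = ?s - 2" using g(3) by auto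
          have "tl_eq K (Comp (cupL (?s - 2) u) (Comp (capL (?s - 2) (j - 2)) ?X)) (Comp (cupL (?s - 2) u) (cupsR k R'))"
            using uj js d pX tl_eq_wt[OF g(1)] cupsR_props[OF g(2)] l by (intro eq_comp[OF tl_eq_refl g(1)]) auto
          then have t: "tl_eq K (Comp (capL ?s j) (Comp (cupL ?s u) ?X)) (cupsR k (u # R'))"
            using T1 tl_eq_trans l by simp blast
          have inv: "pinv j (u # R) (u # R')" using g(4) uj d unfolding pinv_def by auto
          have lt: "\<forall>x\<in>set R'. x < u" using g(4) d(2) unfolding pinv_def by fastforce
          have dd: "decr k (u # R')" using g(2,3) lt uj js by auto
          show ?thesis using t inv dd g(3) pcu PCanc by (simp add: pgood_def)
        next
          case (PPass j' R')
          then have g: "tl_eq K (Comp (capL (?s - 2) (j - 2)) ?X) (Comp (cupsR (k - 2) R') (capL (k - 2) j'))"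
            "j' + 2 \<le> k" "decr (k - 2) R'" "length R' = length R" "pinv (j - 2) R R'" using G by (simp_all add: pgood_def)
          have l: "k - 2 + 2 * length R' = ?s - 2" using g(2,4) by auto
          note pR = cupsR_props[OF g(3)]
          have "tl_eq K (Comp (cupL (?s - 2) u) (Comp (capL (?s - 2) (j - 2)) ?X))
              (Comp (cupL (?s - 2) u) (Comp (cupsR (k - 2) R') (capL (k - 2) j')))"
            using uj js d pX tl_eq_wt[OF g(1)] pR l by (intro eq_comp[OF tl_eq_refl g(1)]) auto
          also have "tl_eq K \<dots> (Comp (Comp (cupL (?s - 2) u) (cupsR (k - 2) R')) (capL (k - 2) j'))"
            using uj js d g pR l by (intro tsym[OF cassoc]) auto
          finally have t: "tl_eq K (Comp (capL ?s j) (Comp (cupL ?s u) ?X)) (Comp (cupsR (k - 2) (u # R')) (capL (k - 2) j'))"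
            using T1 tl_eq_trans l by simp blast
          have inv: "pinv j (u # R) (u # R')" using g(5) uj d unfolding pinv_def by auto
          have lt: "\<forall>x\<in>set R'. x < u" using g(5) d(2) unfolding pinv_def by fastforce
          have dd: "decr (k - 2) (u # R')" using g(2,3,4) lt uj js by auto
          show ?thesis using t inv dd g(2,4) pcu PPass by (simp add: pgood_def)
        qed
      qed
    qed
  qed
qed


definition canon :: "nat \<Rightarrow> nat list \<Rightarrow> nat list \<Rightarrow> tm" where
  "canon k C R = Comp (cupsR k R) (capsT k C)"

definition cv :: "nat \<Rightarrow> nat list \<Rightarrow> nat list \<Rightarrow> bool" where
  "cv k C R = (incr k C \<and> decr k R)"

lemma canon_props: "cv k C R \<Longrightarrow> wt (canon k C R) \<and> dom (canon k C R) = k + 2 * length C \<and> cod (canon k C R) = k + 2 * length R"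
  unfolding canon_def cv_def using capsT_props cupsR_props by auto

lemma step_cup: assumes "cv k C R" "j \<le> k + 2 * length R"
  shows "cv k C (ins j R) \<and> tl_eq (K::'k::field itself) (Comp (cupL (k + 2 * length R) j) (canon k C R)) (canon k C (ins j R))"
proof -
  have v: "incr k C" "decr k R" using assms(1) by (auto simp: cv_def)
  note I = ins_lem[OF v(2) assms(2), where K=K]
  note pU = cupsR_props[OF v(2)] and pD = capsT_props[OF v(1)]
  have "tl_eq K (Comp (cupL (k + 2 * length R) j) (Comp (cupsR k R) (capsT k C)))
      (Comp (Comp (cupL (k + 2 * length R) j) (cupsR k R)) (capsT k C))"
    using assms pU pD by (intro tsym[OF cassoc]) auto
  also have "tl_eq K \<dots> (Comp (cupsR k (ins j R)) (capsT k C))"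
    using assms pU pD I by (intro eq_comp[OF _ tl_eq_refl]) auto
  finally show ?thesis using I v by (simp add: canon_def cv_def)
qed

lemma step_cap: assumes "cv k C R" "j + 2 \<le> k + 2 * length R"
  shows "tl_zero (K::'k::field itself) (Comp (capL (k + 2 * length R - 2) j) (canon k C R)) \<or>
    (\<exists>k' C' R'. cv k' C' R' \<and> k' + 2 * length C' = k + 2 * length C \<and>
       tl_eq K (Comp (capL (k + 2 * length R - 2) j) (canon k C R)) (canon k' C' R'))"
proof -
  have v: "incr k C" "decr k R" using assms(1) by (auto simp: cv_def)
  note G = pc_lem[OF v(2) assms(2), where K=K]
  note pU = cupsR_props[OF v(2)] and pD = capsT_props[OF v(1)]
  let ?L = "capL (k + 2 * length R - 2) j"
  have T0: "tl_eq K (Comp ?L (canon k C R)) (Comp (Comp ?L (cupsR k R)) (capsT k C))"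
    unfolding canon_def using assms pU pD by (intro tsym[OF cassoc]) auto
  show ?thesis
  proof (cases "pc j R")
    case PZero
    then have "tl_zero K (Comp ?L (cupsR k R))" using G by (simp add: pgood_def)
    then have "tl_zero K (Comp (Comp ?L (cupsR k R)) (capsT k C))"
      using pU pD assms by (intro zero_comp_right[OF \<open>tl_zero K (Comp ?L (cupsR k R))\<close>]) auto
    then show ?thesis using T0 tl_zero_eq by blast
  next
    case (PCanc R')
    then have g: "tl_eq K (Comp ?L (cupsR k R)) (cupsR k R')" "decr k R'" using G by (simp_all add: pgood_def)
    have "tl_eq K (Comp (Comp ?L (cupsR k R)) (capsT k C)) (Comp (cupsR k R') (capsT k C))"
      using pU pD assms by (intro eq_comp[OF g(1) tl_eq_refl]) auto
    then have "tl_eq K (Comp ?L (canon k C R)) (canon k C R')"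
      using T0 tl_eq_trans unfolding canon_def by blast
    then show ?thesis using g(2) v(1) by (auto simp: cv_def)
  next
    case (PPass j' R')
    then have g: "tl_eq K (Comp ?L (cupsR k R)) (Comp (cupsR (k - 2) R') (capL (k - 2) j'))"
      "j' + 2 \<le> k" "decr (k - 2) R'" using G by (simp_all add: pgood_def)
    have kk: "k - 2 + 2 = k" using g(2) by simp
    have vC: "incr (k - 2 + 2) C" using v(1) kk by simp
    note F = insF_lem[OF vC, of j', where K=K]
    have F': "tl_eq K (Comp (capL (k - 2) j') (capsT k C)) (capsT (k - 2) (insF j' C))"
      "incr (k - 2) (insF j' C)" "length (insF j' C) = Suc (length C)"
      using F g(2) kk by auto
    note pR = cupsR_props[OF g(3)]
    have "tl_eq K (Comp (Comp ?L (cupsR k R)) (capsT k C)) (Comp (Comp (cupsR (k - 2) R') (capL (k - 2) j')) (capsT k C))"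
      using pU pD assms by (intro eq_comp[OF g(1) tl_eq_refl]) auto
    also have "tl_eq K \<dots> (Comp (cupsR (k - 2) R') (Comp (capL (k - 2) j') (capsT k C)))"
      using pR pD g(2) by (intro cassoc) auto
    also have "tl_eq K \<dots> (Comp (cupsR (k - 2) R') (capsT (k - 2) (insF j' C)))"
      using pR pD g(2) capsT_props[OF F'(2)] by (intro eq_comp[OF tl_eq_refl F'(1)]) auto
    finally have "tl_eq K (Comp ?L (canon k C R)) (canon (k - 2) (insF j' C) R')"
      using T0 tl_eq_trans unfolding canon_def by blast
    moreover have "cv (k - 2) (insF j' C) R'" using F'(2) g(3) by (simp add: cv_def)
    moreover have "k - 2 + 2 * length (insF j' C) = k + 2 * length C" using F'(3) g(2) by simp
    ultimately show ?thesis by blast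
  qed
qed

lemma norm_word: "wvalid s gs \<Longrightarrow> cv k C R \<Longrightarrow> s = k + 2 * length R \<Longrightarrow>
  tl_zero (K::'k::field itself) (Comp (wordT s gs) (canon k C R)) \<or>
  (\<exists>k' C' R'. cv k' C' R' \<and> k' + 2 * length C' = k + 2 * length C \<and>
     tl_eq K (Comp (wordT s gs) (canon k C R)) (canon k' C' R'))"
proof (induction gs arbitrary: s k C R)
  case Nil
  have "tl_eq K (Comp (Id s) (canon k C R)) (canon k C R)"
    using canon_props[OF Nil(2)] Nil(3) by (intro idl) auto
  then show ?case using Nil by auto
next
  case (Cons g gs)
  note pX = canon_props[OF Cons.prems(2)]
  have v: "lok s g" "wvalid (nxt s g) gs" using Cons.prems(1) by auto
  note pL = lay_props[OF v(1)] and pW = word_props[OF v(2)]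
  have L: "tl_zero K (Comp (lay s g) (canon k C R)) \<or>
    (\<exists>k' C' R'. cv k' C' R' \<and> k' + 2 * length C' = k + 2 * length C \<and> k' + 2 * length R' = nxt s g \<and>
       tl_eq K (Comp (lay s g) (canon k C R)) (canon k' C' R'))"
  proof (cases g)
    case (Pair b i)
    show ?thesis
    proof (cases b)
      case True
      then have "i \<le> k + 2 * length R" using v(1) Pair Cons.prems(3) by simp
      note S = step_cup[OF Cons.prems(2) this, where K=K]
      have "length (ins i R) = Suc (length R)"
        using ins_lem[OF _ \<open>i \<le> k + 2 * length R\<close>, where K=K] Cons.prems(2) by (auto simp: cv_def)
      then show ?thesis using S True Pair Cons.prems(3) by (intro disjI2 exI[of _ k] exI[of _ C] exI[of _ "ins i R"]) auto
    next
      case False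
      then have "i + 2 \<le> k + 2 * length R" using v(1) Pair Cons.prems(3) by simp
      note S = step_cap[OF Cons.prems(2) this, where K=K]
      show ?thesis
      proof (cases "tl_zero K (Comp (capL (k + 2 * length R - 2) i) (canon k C R))")
        case True
        then show ?thesis using False Pair Cons.prems(3) by auto
      next
        case nz: False
        then obtain k' C' R' where kk: "cv k' C' R'" "k' + 2 * length C' = k + 2 * length C"
          "tl_eq K (Comp (capL (k + 2 * length R - 2) i) (canon k C R)) (canon k' C' R')" using S by blast
        have c1: "cod (canon k' C' R') = k + 2 * length R - 2"
          using kk(3) canon_props[OF Cons.prems(2)] \<open>i + 2 \<le> k + 2 * length R\<close> by (auto simp: tl_eq_def)
        have "k' + 2 * length R' = nxt s g" using c1 canon_props[OF kk(1)] False Pair Cons.prems(3) by simp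
        then show ?thesis using kk False Pair Cons.prems(3) by auto
      qed
    qed
  qed
  have T0: "tl_eq K (Comp (wordT s (g # gs)) (canon k C R)) (Comp (wordT (nxt s g) gs) (Comp (lay s g) (canon k C R)))"
    using pL pW pX Cons.prems(3) by (simp add: cassoc)
  show ?case
  proof (cases "tl_zero K (Comp (lay s g) (canon k C R))")
    case True
    then have "tl_zero K (Comp (wordT (nxt s g) gs) (Comp (lay s g) (canon k C R)))"
      using pL pW pX Cons.prems(3) by (intro zero_comp_left[OF True]) auto
    then show ?thesis using T0 tl_zero_eq by blast
  next
    case False
    then obtain k' C' R' where kk: "cv k' C' R'" "k' + 2 * length C' = k + 2 * length C" "k' + 2 * length R' = nxt s g"
       "tl_eq K (Comp (lay s g) (canon k C R)) (canon k' C' R')" using L by blast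
    have A: "tl_eq K (Comp (wordT (nxt s g) gs) (Comp (lay s g) (canon k C R))) (Comp (wordT (nxt s g) gs) (canon k' C' R'))"
      by (rule eq_comp[OF tl_eq_refl kk(4)]) (use pL pW pX Cons.prems(3) in auto)
    have T1: "tl_eq K (Comp (wordT s (g # gs)) (canon k C R)) (Comp (wordT (nxt s g) gs) (canon k' C' R'))"
      using tl_eq_trans[OF T0 A] .
    note IH = Cons.IH[OF v(2) kk(1) kk(3)[symmetric]]
    show ?thesis
    proof (cases "tl_zero K (Comp (wordT (nxt s g) gs) (canon k' C' R'))")
      case True
      then show ?thesis using T1 tl_zero_eq by blast
    next
      case False
      then obtain k2 C2 R2 where "cv k2 C2 R2" "k2 + 2 * length C2 = k' + 2 * length C'"
        "tl_eq K (Comp (wordT (nxt s g) gs) (canon k' C' R')) (canon k2 C2 R2)" using IH by blast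
      then show ?thesis using T1 kk(2) tl_eq_trans by metis
    qed
  qed
qed

lemma normal_form: "wt t \<Longrightarrow> tl_zero (K::'k::field itself) t \<or> (\<exists>k C R. cv k C R \<and> tl_eq K t (canon k C R))"
proof -
  assume w: "wt t"
  obtain gs where g: "wvalid (dom t) gs" "tl_eq K t (wordT (dom t) gs)" using term_word[OF w] by blast
  note pW = word_props[OF g(1)]
  have c0: "cv (dom t) [] []" by (simp add: cv_def)
  have "tl_eq K t (Comp (wordT (dom t) gs) (Id (dom t)))"
    using g(2) tsym[OF idr[of "wordT (dom t) gs" "dom t", where K=K]] pW tl_eq_trans by auto
  also have "tl_eq K \<dots> (Comp (wordT (dom t) gs) (canon (dom t) [] []))"
    unfolding canon_def cupsR.simps capsT.simps using pW by (intro eq_comp[OF tl_eq_refl tsym[OF idid]]) auto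
  finally have T: "tl_eq K t (Comp (wordT (dom t) gs) (canon (dom t) [] []))" .
  have NW: "tl_zero K (Comp (wordT (dom t) gs) (canon (dom t) [] [])) \<or>
    (\<exists>k' C' R'. cv k' C' R' \<and> k' + 2 * length C' = dom t + 2 * length ([]::nat list) \<and>
     tl_eq K (Comp (wordT (dom t) gs) (canon (dom t) [] [])) (canon k' C' R'))"
    by (rule norm_word[OF g(1) c0]) simp
  from NW show ?thesis
  proof (elim disjE exE conjE)
    assume "tl_zero K (Comp (wordT (dom t) gs) (canon (dom t) [] []))"
    then show ?thesis using tl_zero_eq[OF T] by blast
  next
    fix k' C' R' assume "cv k' C' R'" "tl_eq K (Comp (wordT (dom t) gs) (canon (dom t) [] [])) (canon k' C' R')"
    then show ?thesis using tl_eq_trans[OF T] by blast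
  qed
qed



section \<open>Semantics of canonical forms\<close>

definition ins2 :: "nat \<Rightarrow> bool list \<Rightarrow> bool list" where
  "ins2 u v = take u v @ [True, False] @ drop u v"

fun outs :: "nat list \<Rightarrow> bool list \<Rightarrow> bool list" where
  "outs [] v = v"
| "outs (u # R) v = ins2 u (outs R v)"

lemma length_ins2[simp]: "u \<le> length v \<Longrightarrow> length (ins2 u v) = length v + 2"
  by (simp add: ins2_def)

lemma sem_cupL: "u \<le> s \<Longrightarrow> sem (cupL s u) w = (if length w = s then Some (ins2 u w) else None)"
  by (auto simp: cupL_def ins2_def min_def)

lemma sem_capL: assumes "c \<le> s" shows "(sem (capL s c) w = Some v) = (length v = s \<and> w = ins2 c v)"
proof
  assume h: "sem (capL s c) w = Some v"
  then have l: "length w = s + 2" and t2: "take 2 (drop c w) = [True, False]"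
    and v: "v = take c w @ drop 2 (drop c w)"
    using assms by (auto simp: capL_def split: if_splits option.splits)
  have "drop c w = take 2 (drop c w) @ drop 2 (drop c w)" by (rule append_take_drop_id[symmetric])
  then have dc: "drop c w = [True, False] @ drop (c + 2) w" using t2 by (metis drop_drop add.commute)
  have lv: "length v = s" using l v assms by simp
  have "ins2 c v = take c w @ [True, False] @ drop (c + 2) w"
    using v l assms by (simp add: ins2_def min_def add.commute)
  also have "\<dots> = w" using dc by (metis append_take_drop_id)
  finally show "length v = s \<and> w = ins2 c v" using lv by simp
next
  assume h: "length v = s \<and> w = ins2 c v"
  then show "sem (capL s c) w = Some v"
    using assms by (auto simp: capL_def ins2_def min_def)
qed

lemma length_outs: "decr k R \<Longrightarrow> length v = k \<Longrightarrow> length (outs R v) = k + 2 * length R"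
  by (induction R) auto

lemma sem_cupsR: "decr k R \<Longrightarrow> sem (cupsR k R) w = (if length w = k then Some (outs R w) else None)"
proof (induction R)
  case Nil
  then show ?case by simp
next
  case (Cons u R)
  then have d: "u \<le> k + 2 * length R" "decr k R" by auto
  show ?case using Cons.IH[OF d(2)] d sem_cupL[OF d(1)] length_outs[OF d(2)] by auto
qed

lemma outs_append: "outs (A @ B) v = outs A (outs B v)"
  by (induction A) auto

lemma sem_capsT: "incr k C \<Longrightarrow> (sem (capsT k C) w = Some v) = (length v = k \<and> w = outs (rev C) v)"
proof (induction C arbitrary: k w v)
  case Nil
  then show ?case by auto
next
  case (Cons c cs)
  then have d: "c \<le> k" "incr (k + 2) cs" by auto
  have "(sem (capsT k (c # cs)) w = Some v) = (\<exists>z. sem (capsT (k + 2) cs) w = Some z \<and> sem (capL k c) z = Some v)"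
    by (auto simp: bind_eq_Some_conv)
  also have "\<dots> = (\<exists>z. (length z = k + 2 \<and> w = outs (rev cs) z) \<and> (length v = k \<and> z = ins2 c v))"
    using Cons.IH[OF d(2)] sem_capL[OF d(1)] by simp
  also have "\<dots> = (length v = k \<and> w = outs (rev (c # cs)) v)"
    using d(1) by (auto simp: outs_append)
  finally show ?case .
qed

lemma sem_canon: "cv k C R \<Longrightarrow> (sem (canon k C R) w = Some z) = (\<exists>v. length v = k \<and> w = outs (rev C) v \<and> z = outs R v)"
proof -
  assume "cv k C R"
  then have v: "incr k C" "decr k R" by (auto simp: cv_def)
  have "(sem (canon k C R) w = Some z) = (\<exists>v. sem (capsT k C) w = Some v \<and> sem (cupsR k R) v = Some z)"
    by (auto simp: canon_def bind_eq_Some_conv)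
  also have "\<dots> = (\<exists>v. length v = k \<and> w = outs (rev C) v \<and> z = outs R v)"
    using sem_capsT[OF v(1)] sem_cupsR[OF v(2)] by auto
  finally show ?thesis .
qed

lemma canon_some: assumes "cv k C R" shows "sem (canon k C R) (outs (rev C) (replicate k True)) = Some (outs R (replicate k True))"
  unfolding sem_canon[OF assms] by (intro exI[of _ "replicate k True"]) simp

lemma canon_nonempty: "cv k C R \<Longrightarrow> sem (canon k C R) (outs (rev C) (replicate k True)) \<noteq> None"
  using canon_some by simp

definition cntT :: "bool list \<Rightarrow> nat" where "cntT l = length (filter id l)"

lemma cntT_ins2: "cntT (ins2 u v) = Suc (cntT v)"
proof -
  have "cntT (ins2 u v) = Suc (length (filter id (take u v)) + length (filter id (drop u v)))"
    by (simp add: cntT_def ins2_def)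
  also have "\<dots> = Suc (cntT v)"
    unfolding cntT_def by (metis filter_append length_append append_take_drop_id)
  finally show ?thesis .
qed

lemma cntT_outs: "cntT (outs A v) = length A + cntT v"
  by (induction A) (auto simp: cntT_ins2)

lemma cntT_le: "cntT v \<le> length v"
  by (simp add: cntT_def)

lemma cntT_full: "cntT v = length v \<Longrightarrow> v = replicate (length v) True"
proof -
  assume "cntT v = length v"
  then have "\<forall>x\<in>set v. id x" unfolding cntT_def by (metis filter_id_conv length_filter_less less_irrefl)
  then show ?thesis by (metis id_apply replicate_length_same)
qed

lemma cntT_rep: "cntT (replicate k True) = k"
  by (simp add: cntT_def)

lemma length_outs': "length (outs A v) = length v + 2 * length A \<or> True"
  by simp

lemma decr_snoc: "decr (k + 2) A \<Longrightarrow> c \<le> k \<Longrightarrow> (\<forall>x\<in>set A. c < x) \<Longrightarrow> decr k (A @ [c])"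
  by (induction A) auto

lemma incr_rev: "incr k C \<Longrightarrow> decr k (rev C)"
  by (induction C arbitrary: k) (auto intro!: decr_snoc)

definition xy :: "bool list \<Rightarrow> nat \<Rightarrow> bool" where
  "xy v i = (Suc i < length v \<and> v ! i \<and> \<not> v ! Suc i)"

lemma ins2_nth: "u \<le> length V \<Longrightarrow> i < length V + 2 \<Longrightarrow> ins2 u V ! i =
  (if i < u then V ! i else if i = u then True else if i = Suc u then False else V ! (i - 2))"
  by (auto simp: ins2_def nth_append min_def)

lemma xy_outs: "decr k A \<Longrightarrow> xy (outs A (replicate k True)) i \<Longrightarrow> A \<noteq> [] \<and> i \<le> hd A"
proof (induction A arbitrary: i)
  case Nil
  then show ?case by (auto simp: xy_def)
next
  case (Cons u R)
  let ?V = "outs R (replicate k True)"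
  have d: "u \<le> k + 2 * length R" "\<forall>x\<in>set R. x < u" "decr k R" using Cons.prems by auto
  have lV: "length ?V = k + 2 * length R" using length_outs[OF d(3)] by simp
  have uV: "u \<le> length ?V" using lV d by simp
  have "i \<le> u"
  proof (rule ccontr)
    assume "\<not> i \<le> u"
    then have iu: "u < i" by simp
    have x: "xy (ins2 u ?V) i" using Cons.prems by simp
    show False
    proof (cases "i = Suc u")
      case True
      then show False using x ins2_nth[OF uV, of "Suc u"] uV unfolding xy_def by simp
    next
      case False
      then have i2: "Suc u < i" using iu by simp
      have "xy ?V (i - 2)"
        using x ins2_nth[OF uV, of i] ins2_nth[OF uV, of "Suc i"] i2 uV unfolding xy_def
        by (auto simp: Suc_diff_Suc numeral_2_eq_2)
      then have "R \<noteq> [] \<and> i - 2 \<le> hd R" using Cons.IH[OF d(3)] by blast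
      then have "i - 2 < u" using d(2) by (metis hd_in_set le_less_trans)
      then show False using i2 by simp
    qed
  qed
  then show ?case by simp
qed

lemma xy_hd: "decr k (u # R) \<Longrightarrow> xy (outs (u # R) (replicate k True)) u"
proof -
  assume h: "decr k (u # R)"
  then have d: "u \<le> k + 2 * length R" "decr k R" by auto
  let ?V = "outs R (replicate k True)"
  have uV: "u \<le> length ?V" using length_outs[OF d(2)] d by simp
  show ?thesis using ins2_nth[OF uV, of u] ins2_nth[OF uV, of "Suc u"] uV d unfolding xy_def by simp
qed

lemma ins2_inj: "u \<le> length V \<Longrightarrow> u \<le> length V' \<Longrightarrow> ins2 u V = ins2 u V' \<Longrightarrow> V = V'"
proof -
  assume a: "u \<le> length V" "u \<le> length V'" "ins2 u V = ins2 u V'"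
  have "take u (ins2 u V) = take u V" "drop (u + 2) (ins2 u V) = drop u V" using a(1) by (simp_all add: ins2_def)
  moreover have "take u (ins2 u V') = take u V'" "drop (u + 2) (ins2 u V') = drop u V'" using a(2) by (simp_all add: ins2_def)
  ultimately have "take u V = take u V'" "drop u V = drop u V'" using a(3) by metis+
  then show ?thesis by (metis append_take_drop_id)
qed

lemma outs_inj: "decr k A \<Longrightarrow> decr k B \<Longrightarrow> outs A (replicate k True) = outs B (replicate k True) \<Longrightarrow> A = B"
proof (induction A arbitrary: B)
  case Nil
  show ?case
  proof (cases B)
    case Nil then show ?thesis by simp
  next
    case (Cons u R)
    then have "xy (outs [] (replicate k True)) u" using xy_hd Nil.prems by metis
    then show ?thesis by (auto simp: xy_def)
  qed
next
  case (Cons u R)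
  show ?case
  proof (cases B)
    case Nil
    then have "xy (outs [] (replicate k True)) u" using xy_hd Cons.prems by metis
    then show ?thesis by (auto simp: xy_def)
  next
    case (Cons u' R')
    have x1: "xy (outs B (replicate k True)) u" using xy_hd \<open>decr k (u # R)\<close> Cons.prems(3) by metis
    have x2: "xy (outs (u # R) (replicate k True)) u'" using xy_hd Cons.prems(2,3) Cons by metis
    have "u \<le> u'" using xy_outs[OF Cons.prems(2) x1] Cons by simp
    moreover have "u' \<le> u" using xy_outs[OF Cons.prems(1) x2] by simp
    ultimately have uu: "u = u'" by simp
    have d: "u \<le> k + 2 * length R" "decr k R" using Cons.prems(1) by auto
    have d': "u' \<le> k + 2 * length R'" "decr k R'" using Cons.prems(2) Cons by auto
    have "outs R (replicate k True) = outs R' (replicate k True)"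
      using ins2_inj[of u "outs R (replicate k True)" "outs R' (replicate k True)"]
        length_outs[OF d(2)] length_outs[OF d'(2)] d d' uu Cons.prems(3) Cons by simp
    then have "R = R'" using Cons.IH[OF d(2) d'(2)] by simp
    then show ?thesis using uu Cons by simp
  qed
qed


lemma length_outs_gen: "length (outs A v) = length v + 2 * length A \<or> \<not> decr k A \<or> length v \<noteq> k"
  using length_outs by auto

lemma canon_unique: assumes c1: "cv k C R" and c2: "cv k' C' R'"
  and e: "sem (canon k C R) = sem (canon k' C' R')"
  shows "k = k' \<and> C = C' \<and> R = R'"
proof -
  have v1: "incr k C" "decr k R" "decr k (rev C)" using c1 incr_rev by (auto simp: cv_def)
  have v2: "incr k' C'" "decr k' R'" "decr k' (rev C')" using c2 incr_rev by (auto simp: cv_def)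
  let ?x = "replicate k True" and ?x' = "replicate k' True"
  have "sem (canon k' C' R') (outs (rev C) ?x) = Some (outs R ?x)" using canon_some[OF c1] e by simp
  then obtain v' where v': "length v' = k'" "outs (rev C) ?x = outs (rev C') v'" "outs R ?x = outs R' v'"
    using sem_canon[OF c2] by blast
  have "sem (canon k C R) (outs (rev C') ?x') = Some (outs R' ?x')" using canon_some[OF c2] e by simp
  then obtain v where v: "length v = k" "outs (rev C') ?x' = outs (rev C) v" "outs R' ?x' = outs R v"
    using sem_canon[OF c1] by blast
  have n1: "length C + k = length C' + cntT v'" using arg_cong[OF v'(2), of cntT] by (simp add: cntT_outs cntT_rep)
  have n2: "length C' + k' = length C + cntT v" using arg_cong[OF v(2), of cntT] by (simp add: cntT_outs cntT_rep)
  have l1: "k + 2 * length C = k' + 2 * length C'"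
    using arg_cong[OF v'(2), of length] length_outs[OF v1(3), of ?x] length_outs[OF v2(3) v'(1)] by simp
  have "cntT v' \<le> k'" "cntT v \<le> k" using cntT_le v v' by metis+
  then have cv': "cntT v' = k'" and kk: "k = k'" and lc: "length C = length C'" using n1 n2 l1 by auto
  have "v' = ?x'" using cntT_full[of v'] cv' v'(1) by simp
  then have w: "outs (rev C) ?x = outs (rev C') ?x" "outs R ?x = outs R' ?x" using v' kk by auto
  have "rev C = rev C'" using outs_inj[OF v1(3) _ w(1)] v2(3) kk by simp
  moreover have "R = R'" using outs_inj[OF v1(2) _ w(2)] v2(2) kk by simp
  ultimately show ?thesis using kk by simp
qed

lemma zero_iff: "wt t \<Longrightarrow> tl_zero (K::'k::field itself) t = (\<forall>w. sem t w = None)"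
proof
  assume "tl_zero K t" then show "\<forall>w. sem t w = None" using zero_sem by blast
next
  assume w: "wt t" and n: "\<forall>w. sem t w = None"
  show "tl_zero K t"
  proof (rule ccontr)
    assume "\<not> tl_zero K t"
    then obtain k C R where c: "cv k C R" "tl_eq K t (canon k C R)" using normal_form[OF w, where K=K] by blast
    then show False using eq_sem[OF c(2)] canon_nonempty[OF c(1)] n by simp
  qed
qed

lemma eq_iff: assumes w: "wt s" "wt t" "dom s = dom t" "cod s = cod t"
  shows "tl_eq (K::'k::field itself) s t = (sem s = sem t)"
proof
  assume "tl_eq K s t" then show "sem s = sem t" by (rule eq_sem)
next
  assume e: "sem s = sem t"
  show "tl_eq K s t"
  proof (cases "tl_zero K s")
    case True
    then have "\<forall>w. sem t w = None" using zero_sem[OF True] e by simp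
    then have "tl_zero K t" using zero_iff[OF w(2)] by simp
    then show ?thesis using tl_zero_zero_eq True w by blast
  next
    case False
    then obtain k C R where c: "cv k C R" "tl_eq K s (canon k C R)" using normal_form[OF w(1), where K=K] by blast
    have nz: "\<not> tl_zero K t"
    proof
      assume "tl_zero K t"
      then have "\<forall>w. sem s w = None" using zero_sem e by metis
      then show False using eq_sem[OF c(2)] canon_nonempty[OF c(1)] by simp
    qed
    then obtain k' C' R' where c': "cv k' C' R'" "tl_eq K t (canon k' C' R')" using normal_form[OF w(2), where K=K] by blast
    have "sem (canon k C R) = sem (canon k' C' R')" using eq_sem[OF c(2)] eq_sem[OF c'(2)] e by simp
    then have "k = k' \<and> C = C' \<and> R = R'" using canon_unique[OF c(1) c'(1)] by blast
    then show ?thesis using c(2) tl_eq_sym[OF c'(2)] tl_eq_trans by blast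
  qed
qed

section \<open>Mirror and injectivity\<close>

fun mir :: "tm \<Rightarrow> tm" where
  "mir Cup = Cap"
| "mir Cap = Cup"
| "mir (Id n) = Id n"
| "mir (Comp g f) = Comp (mir f) (mir g)"
| "mir (Tens f g) = Tens (mir f) (mir g)"

lemma mir_props: "wt t \<Longrightarrow> wt (mir t) \<and> dom (mir t) = cod t \<and> cod (mir t) = dom t"
  by (induction t) auto

lemma sem_mir: "wt t \<Longrightarrow> (sem (mir t) a = Some b) = (sem t b = Some a)"
proof (induction t arbitrary: a b)
  case Cup
  then show ?case by auto
next
  case Cap
  then show ?case by auto
next
  case (Id n)
  then show ?case by auto
next
  case (Comp g f)
  then have w: "wt g" "wt f" by auto
  show ?case using Comp.IH(1)[OF w(1)] Comp.IH(2)[OF w(2)] by (auto simp: bind_eq_Some_conv)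
next
  case (Tens f g)
  then have w: "wt f" "wt g" by auto
  note m = mir_props[OF w(1)] mir_props[OF w(2)]
  show ?case
  proof
    assume h: "sem (mir (Tens f g)) a = Some b"
    then obtain p q where pq: "length a = cod f + cod g" "sem (mir f) (take (cod f) a) = Some p"
      "sem (mir g) (drop (cod f) a) = Some q" "b = p @ q"
      using m by (auto split: if_splits option.splits)
    have s1: "sem f p = Some (take (cod f) a)" using Tens.IH(1)[OF w(1)] pq(2) by simp
    have s2: "sem g q = Some (drop (cod f) a)" using Tens.IH(2)[OF w(2)] pq(3) by simp
    have lp: "length p = dom f" using sem_len1[OF s1] .
    have lq: "length q = dom g" using sem_len1[OF s2] .
    show "sem (Tens f g) b = Some a" using pq(4) s1 s2 lp lq by simp
  next
    assume h: "sem (Tens f g) b = Some a"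
    then obtain p q where pq: "length b = dom f + dom g" "sem f (take (dom f) b) = Some p"
      "sem g (drop (dom f) b) = Some q" "a = p @ q"
      by (auto split: if_splits option.splits)
    have s1: "sem (mir f) p = Some (take (dom f) b)" using Tens.IH(1)[OF w(1)] pq(2) by simp
    have s2: "sem (mir g) q = Some (drop (dom f) b)" using Tens.IH(2)[OF w(2)] pq(3) by simp
    have lp: "length p = cod f" using sem_len2[OF pq(2)] .
    have lq: "length q = cod g" using sem_len2[OF pq(3)] .
    show "sem (mir (Tens f g)) a = Some b" using pq(4) s1 s2 lp lq m by simp
  qed
qed

lemma sem_inj: "sem t w1 = Some z \<Longrightarrow> sem t w2 = Some z \<Longrightarrow> w1 = w2"
proof (induction t arbitrary: w1 w2 z)
  case (Comp g f)
  then show ?case by (auto simp: bind_eq_Some_conv)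
next
  case (Tens f g)
  from Tens.prems obtain p1 q1 where a: "length w1 = dom f + dom g" "sem f (take (dom f) w1) = Some p1"
      "sem g (drop (dom f) w1) = Some q1" "z = p1 @ q1"
    by (auto split: if_splits option.splits)
  from Tens.prems obtain p2 q2 where b: "length w2 = dom f + dom g" "sem f (take (dom f) w2) = Some p2"
      "sem g (drop (dom f) w2) = Some q2" "z = p2 @ q2"
    by (auto split: if_splits option.splits)
  have "length p1 = cod f" "length p2 = cod f" using sem_len2 a(2) b(2) by blast+
  then have "p1 = p2" "q1 = q2" using a(4) b(4) by (metis append_eq_append_conv)+
  then have "take (dom f) w1 = take (dom f) w2" "drop (dom f) w1 = drop (dom f) w2"
    using Tens.IH a b by metis+
  then show ?case by (metis append_take_drop_id)
qed (auto split: if_splits)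



section \<open>The monoid T_n\<close>

lemma cls_char: assumes "wt t" "dom t = n" "cod t = n" shows
  "cls (K::'k::field itself) n t = {u. wt u \<and> dom u = n \<and> cod u = n \<and> sem u = sem t}"
  unfolding cls_def
proof (intro Collect_cong)
  fix u
  show "(wt u \<and> dom u = n \<and> cod u = n \<and> tl_eq K u t) = (wt u \<and> dom u = n \<and> cod u = n \<and> sem u = sem t)"
    using eq_iff[of u t K] assms by auto
qed

lemma diag_char: "is_diagram (K::'k::field itself) n t = (wt t \<and> dom t = n \<and> cod t = n \<and> (\<exists>w. sem t w \<noteq> None))"
  unfolding is_diagram_def using zero_iff[of t K] by auto

definition phi :: "tm set option \<Rightarrow> bool list \<Rightarrow> bool list option" where
  "phi x = (case x of None \<Rightarrow> (\<lambda>w. None) | Some A \<Rightarrow> sem (SOME a. a \<in> A))"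

lemma self_cls: "is_diagram (K::'k::field itself) n t \<Longrightarrow> t \<in> cls K n t"
  unfolding cls_def is_diagram_def by (auto simp: tl_eq_refl)

lemma some_cls: "is_diagram (K::'k::field itself) n t \<Longrightarrow>
  (SOME a. a \<in> cls K n t) \<in> cls K n t \<and> sem (SOME a. a \<in> cls K n t) = sem t"
proof -
  assume d: "is_diagram K n t"
  then have "(SOME a. a \<in> cls K n t) \<in> cls K n t" using self_cls by (metis someI)
  moreover then have "sem (SOME a. a \<in> cls K n t) = sem t" using d unfolding is_diagram_def
    by (simp add: cls_char)
  ultimately show ?thesis by blast
qed

lemma phi_cls: "is_diagram (K::'k::field itself) n t \<Longrightarrow> phi (Some (cls K n t)) = sem t"
  unfolding phi_def using some_cls by auto

lemma Tn_cases: "x \<in> Tn (K::'k::field itself) n \<Longrightarrow> x = None \<or> (\<exists>t. is_diagram K n t \<and> x = Some (cls K n t))"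
  unfolding Tn_def by auto

lemma Tn_None: "None \<in> Tn K n" unfolding Tn_def by auto
lemma Tn_Some: "is_diagram K n t \<Longrightarrow> Some (cls K n t) \<in> Tn K n" unfolding Tn_def by auto

lemma tmul_ok: assumes x: "x \<in> Tn (K::'k::field itself) n" and y: "y \<in> Tn K n"
  shows "tmul K n x y \<in> Tn K n \<and> phi (tmul K n x y) = (\<lambda>w. Option.bind (phi y w) (phi x))"
proof (cases "x = None \<or> y = None")
  case True
  then show ?thesis by (auto simp: tmul_def phi_def Tn_None split: option.splits)
next
  case False
  then obtain t t' where tt: "is_diagram K n t" "x = Some (cls K n t)" "is_diagram K n t'" "y = Some (cls K n t')"
    using Tn_cases[OF x] Tn_cases[OF y] by blast
  let ?a = "SOME a. a \<in> cls K n t" and ?b = "SOME b. b \<in> cls K n t'"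
  have a: "?a \<in> cls K n t" "sem ?a = sem t" using some_cls[OF tt(1)] by auto
  have b: "?b \<in> cls K n t'" "sem ?b = sem t'" using some_cls[OF tt(3)] by auto
  have wa: "wt ?a" "dom ?a = n" "cod ?a = n" using a(1) unfolding cls_def by auto
  have wb: "wt ?b" "dom ?b = n" "cod ?b = n" using b(1) unfolding cls_def by auto
  have wc: "wt (Comp ?a ?b)" "dom (Comp ?a ?b) = n" "cod (Comp ?a ?b) = n" using wa wb by auto
  have sc: "sem (Comp ?a ?b) = (\<lambda>w. Option.bind (phi y w) (phi x))"
    unfolding tt(2,4) phi_cls[OF tt(1)] phi_cls[OF tt(3)] by (rule ext) (simp add: a(2) b(2))
  have tm: "tmul K n x y = (if tl_zero K (Comp ?a ?b) then None else Some (cls K n (Comp ?a ?b)))"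
    using tt by (simp add: tmul_def Let_def)
  show ?thesis
  proof (cases "tl_zero K (Comp ?a ?b)")
    case True
    then have "\<forall>w. sem (Comp ?a ?b) w = None" using zero_sem by blast
    then show ?thesis using tm True sc Tn_None by (simp add: phi_def fun_eq_iff)
  next
    case False
    then have d: "is_diagram K n (Comp ?a ?b)" using wc unfolding is_diagram_def by simp
    show ?thesis using tm False Tn_Some[OF d] phi_cls[OF d] sc by simp
  qed
qed

lemma phi_nonempty: "is_diagram (K::'k::field itself) n t \<Longrightarrow> \<exists>w. phi (Some (cls K n t)) w \<noteq> None"
  using phi_cls diag_char by metis

lemma phi_inj: assumes x: "x \<in> Tn (K::'k::field itself) n" and y: "y \<in> Tn K n" and e: "phi x = phi y"
  shows "x = y"
proof -
  consider "x = None" "y = None"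
    | t where "is_diagram K n t" "x = Some (cls K n t)" "y = None"
    | t where "is_diagram K n t" "y = Some (cls K n t)" "x = None"
    | t t' where "is_diagram K n t" "x = Some (cls K n t)" "is_diagram K n t'" "y = Some (cls K n t')"
    using Tn_cases[OF x] Tn_cases[OF y] by blast
  then show ?thesis
  proof cases
    case 1 then show ?thesis by simp
  next
    case 2 then show ?thesis using phi_nonempty[OF 2(1)] e by (simp add: phi_def)
  next
    case 3 then show ?thesis using phi_nonempty[OF 3(1)] e[symmetric] by (simp add: phi_def)
  next
    case 4
    then have "sem t = sem t'" using e phi_cls by metis
    then have "cls K n t = cls K n t'" using 4 unfolding diag_char by (simp add: cls_char)
    then show ?thesis using 4 by simp
  qed
qed

lemma phi_pinj: "x \<in> Tn (K::'k::field itself) n \<Longrightarrow> phi x w1 = Some z \<Longrightarrow> phi x w2 = Some z \<Longrightarrow> w1 = w2"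
  using Tn_cases[of x K n] phi_cls[of K n] sem_inj by (fastforce simp: phi_def)

lemma phi_inv: assumes x: "x \<in> Tn (K::'k::field itself) n"
  shows "\<exists>y\<in>Tn K n. \<forall>a b. (phi y a = Some b) = (phi x b = Some a)"
proof (cases "x = None")
  case True
  then show ?thesis by (intro bexI[of _ None]) (auto simp: phi_def Tn_None)
next
  case False
  then obtain t where tt: "is_diagram K n t" "x = Some (cls K n t)" using Tn_cases[OF x] by blast
  have w: "wt t" "dom t = n" "cod t = n" using tt(1) unfolding is_diagram_def by auto
  note m = mir_props[OF w(1)]
  obtain w0 where "sem t w0 \<noteq> None" using tt(1) diag_char by blast
  then obtain z0 where "sem t w0 = Some z0" by blast
  then have "sem (mir t) z0 = Some w0" using sem_mir[OF w(1)] by simp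
  then have d: "is_diagram K n (mir t)" using m w unfolding diag_char by auto
  show ?thesis
    by (rule bexI[OF _ Tn_Some[OF d]]) (simp add: phi_cls[OF d] phi_cls[OF tt(1)] tt(2) sem_mir[OF w(1)])
qed

theorem mainTheorem17:
  fixes n :: nat
  shows "\<forall>s \<in> Tn TYPE('k::field) n. \<exists>!t. t \<in> Tn TYPE('k) n \<and>
           s = tmul TYPE('k) n (tmul TYPE('k) n s t) s \<and>
           t = tmul TYPE('k) n (tmul TYPE('k) n t s) t"
proof
  fix s assume s: "s \<in> Tn TYPE('k) n"
  obtain t where t: "t \<in> Tn TYPE('k) n" "\<And>a b. (phi t a = Some b) = (phi s b = Some a)"
    using phi_inv[OF s] by blast
  note st = tmul_ok[OF s t(1)] and ts = tmul_ok[OF t(1) s]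
  note sts = tmul_ok[OF conjunct1[OF st] s] and tst = tmul_ok[OF conjunct1[OF ts] t(1)]
  have e1: "phi (tmul TYPE('k) n (tmul TYPE('k) n s t) s) = phi s"
  proof
    fix w
    show "phi (tmul TYPE('k) n (tmul TYPE('k) n s t) s) w = phi s w"
    proof (cases "phi s w")
      case None then show ?thesis using sts st by simp
    next
      case (Some z)
      then have "phi t z = Some w" using t(2) by blast
      then show ?thesis using sts st Some by simp
    qed
  qed
  have e2: "phi (tmul TYPE('k) n (tmul TYPE('k) n t s) t) = phi t"
  proof
    fix w
    show "phi (tmul TYPE('k) n (tmul TYPE('k) n t s) t) w = phi t w"
    proof (cases "phi t w")
      case None then show ?thesis using tst ts by simp
    next
      case (Some z)
      then have "phi s z = Some w" using t(2) by blast
      then show ?thesis using tst ts Some by simp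
    qed
  qed
  have E1: "s = tmul TYPE('k) n (tmul TYPE('k) n s t) s"
    using phi_inj[OF s conjunct1[OF sts]] e1 by simp
  have E2: "t = tmul TYPE('k) n (tmul TYPE('k) n t s) t"
    using phi_inj[OF t(1) conjunct1[OF tst]] e2 by simp
  show "\<exists>!t. t \<in> Tn TYPE('k) n \<and> s = tmul TYPE('k) n (tmul TYPE('k) n s t) s \<and>
           t = tmul TYPE('k) n (tmul TYPE('k) n t s) t"
  proof (rule ex1I[of _ t])
    show "t \<in> Tn TYPE('k) n \<and> s = tmul TYPE('k) n (tmul TYPE('k) n s t) s \<and>
           t = tmul TYPE('k) n (tmul TYPE('k) n t s) t" using t(1) E1 E2 by simp
  next
    fix t' assume h: "t' \<in> Tn TYPE('k) n \<and> s = tmul TYPE('k) n (tmul TYPE('k) n s t') s \<and>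
           t' = tmul TYPE('k) n (tmul TYPE('k) n t' s) t'"
    then have t': "t' \<in> Tn TYPE('k) n" by simp
    note st' = tmul_ok[OF s t'] and t's = tmul_ok[OF t' s]
    note st's = tmul_ok[OF conjunct1[OF st'] s] and t'st' = tmul_ok[OF conjunct1[OF t's] t']
    have A: "\<And>w. phi s w = Option.bind (phi s w) (\<lambda>z. Option.bind (phi t' z) (phi s))"
    proof -
      fix w
      have "phi s w = phi (tmul TYPE('k) n (tmul TYPE('k) n s t') s) w" using h by metis
      then show "phi s w = Option.bind (phi s w) (\<lambda>z. Option.bind (phi t' z) (phi s))"
        using st's st' by simp
    qed
    have B: "\<And>w. phi t' w = Option.bind (phi t' w) (\<lambda>z. Option.bind (phi s z) (phi t'))"
    proof -
      fix w
      have "phi t' w = phi (tmul TYPE('k) n (tmul TYPE('k) n t' s) t') w" using h by metis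
      then show "phi t' w = Option.bind (phi t' w) (\<lambda>z. Option.bind (phi s z) (phi t'))"
        using t'st' t's by simp
    qed
    have C: "(phi t' a = Some b) = (phi s b = Some a)" for a b
    proof
      assume q: "phi t' a = Some b"
      have "phi t' a = Option.bind (phi s b) (phi t')" using B[of a] q by simp
      then obtain d where d: "phi s b = Some d" "phi t' d = Some b" using q
        by (cases "phi s b") auto
      have "d = a" using phi_pinj[OF t' d(2) q] .
      then show "phi s b = Some a" using d by simp
    next
      assume p: "phi s b = Some a"
      have "phi s b = Option.bind (phi t' a) (phi s)" using A[of b] p by simp
      then obtain c where c: "phi t' a = Some c" "phi s c = Some a" using p
        by (cases "phi t' a") auto
      have "c = b" using phi_pinj[OF s c(2) p] .
      then show "phi t' a = Some b" using c by simp
    qed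
    have "phi t' = phi t"
    proof
      fix a
      show "phi t' a = phi t a"
      proof (cases "phi t a")
        case None
        then show ?thesis using C t(2) by (metis not_None_eq)
      next
        case (Some b)
        then show ?thesis using C t(2) by metis
      qed
    qed
    then show "t' = t" using phi_inj[OF t' t(1)] by simp
  qed
qed


end
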